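(* Let $P$ be a finite atomic lattice that is ranked and whose Hasse diagram is a uniform layered graph. If $Q$ is a finite ranked poset with unique minimal element such that $Q\sim_BP$, then $Q_{\ge2}\cong P_{\ge2}$; that is, $P_{\ge2}$ is determined up to isomorphism by the doubly graded algebra $B(P)$.
   Context: A lattice is atomic if every element is a join of atoms (elements covering the minimum $\hat0$). A ranked poset has a rank function with $|x|=|y|+1$ whenever $x$ covers $y$ and $|x|=0$ iff $x$ is minimal; its Hasse diagram is the layered graph with layers $P_i=\{p:|p|=i\}$ and edges $(p,q)$ for coverings $p\gtrdot q$; $S(p)$ is the set of elements covered by $p$; $P_{\ge j}=\bigcup_{i\ge j}P_i$. The Hasse diagram is uniform if for every $p$ of rank $\ge2$ the elements of $S(p)$ form a single class under the transitive closure of $x\approx y$ iff $S(x)\cap S(y)\neq\emptyset$. For a layered graph with vertex set $V=\bigsqcup V_i$, $V_+=\bigsqcup_{i\ge1}V_i$, $B(\Gamma)=T(V_+)/R_B$ over a field $\mathbb F$, where $R_B$ is generated by $\{vw: v,w\in V_+,(v,w)\notin E\}\cup\{v\sum_{w\in S(v)}w: |v|\ge2\}$, doubly graded with $v_1\cdots v_m$ in bidegree $(m,\sum|v_i|)$. $Q\sim_BP$ means there is a doubly graded algebra isomorphism $B(P)\to B(Q)$. *)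

theory Defs
  imports Main
begin

definition is_poset :: "'a set \<Rightarrow> ('a \<Rightarrow> 'a \<Rightarrow> bool) \<Rightarrow> bool" where
  "is_poset A le \<longleftrightarrow>
     (\<forall>x\<in>A. le x x) \<and>
     (\<forall>x\<in>A. \<forall>y\<in>A. le x y \<and> le y x \<longrightarrow> x = y) \<and>
     (\<forall>x\<in>A. \<forall>y\<in>A. \<forall>z\<in>A. le x y \<and> le y z \<longrightarrow> le x z)"

definition covers :: "'a set \<Rightarrow> ('a \<Rightarrow> 'a \<Rightarrow> bool) \<Rightarrow> 'a \<Rightarrow> 'a \<Rightarrow> bool" where
  "covers A le x y \<longleftrightarrow> x \<in> A \<and> y \<in> A \<and> le y x \<and> x \<noteq> y \<and>
     \<not> (\<exists>z\<in>A. le y z \<and> le z x \<and> z \<noteq> y \<and> z \<noteq> x)"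

definition minimal_el :: "'a set \<Rightarrow> ('a \<Rightarrow> 'a \<Rightarrow> bool) \<Rightarrow> 'a \<Rightarrow> bool" where
  "minimal_el A le x \<longleftrightarrow> x \<in> A \<and> (\<forall>y\<in>A. le y x \<longrightarrow> y = x)"

definition rank_function :: "'a set \<Rightarrow> ('a \<Rightarrow> 'a \<Rightarrow> bool) \<Rightarrow> ('a \<Rightarrow> nat) \<Rightarrow> bool" where
  "rank_function A le r \<longleftrightarrow>
     (\<forall>x\<in>A. \<forall>y\<in>A. covers A le x y \<longrightarrow> r x = r y + 1) \<and>
     (\<forall>x\<in>A. r x = 0 \<longleftrightarrow> minimal_el A le x)"

definition ranked :: "'a set \<Rightarrow> ('a \<Rightarrow> 'a \<Rightarrow> bool) \<Rightarrow> bool" where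
  "ranked A le \<longleftrightarrow> (\<exists>r. rank_function A le r)"

text \<open>The rank |x| (uniquely determined on A for a finite ranked poset).\<close>
definition rk :: "'a set \<Rightarrow> ('a \<Rightarrow> 'a \<Rightarrow> bool) \<Rightarrow> 'a \<Rightarrow> nat" where
  "rk A le = (SOME r. rank_function A le r)"

definition is_lub :: "'a set \<Rightarrow> ('a \<Rightarrow> 'a \<Rightarrow> bool) \<Rightarrow> 'a set \<Rightarrow> 'a \<Rightarrow> bool" where
  "is_lub A le S x \<longleftrightarrow> x \<in> A \<and> (\<forall>s\<in>S. le s x) \<and> (\<forall>y\<in>A. (\<forall>s\<in>S. le s y) \<longrightarrow> le x y)"

definition is_glb :: "'a set \<Rightarrow> ('a \<Rightarrow> 'a \<Rightarrow> bool) \<Rightarrow> 'a set \<Rightarrow> 'a \<Rightarrow> bool" where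
  "is_glb A le S x \<longleftrightarrow> x \<in> A \<and> (\<forall>s\<in>S. le x s) \<and> (\<forall>y\<in>A. (\<forall>s\<in>S. le y s) \<longrightarrow> le y x)"

definition is_lattice :: "'a set \<Rightarrow> ('a \<Rightarrow> 'a \<Rightarrow> bool) \<Rightarrow> bool" where
  "is_lattice A le \<longleftrightarrow> is_poset A le \<and> A \<noteq> {} \<and>
     (\<forall>x\<in>A. \<forall>y\<in>A. (\<exists>z. is_lub A le {x, y} z) \<and> (\<exists>z. is_glb A le {x, y} z))"

definition atom :: "'a set \<Rightarrow> ('a \<Rightarrow> 'a \<Rightarrow> bool) \<Rightarrow> 'a \<Rightarrow> bool" where
  "atom A le a \<longleftrightarrow> (\<exists>z\<in>A. (\<forall>y\<in>A. le z y) \<and> covers A le a z)"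

definition atomic :: "'a set \<Rightarrow> ('a \<Rightarrow> 'a \<Rightarrow> bool) \<Rightarrow> bool" where
  "atomic A le \<longleftrightarrow> (\<forall>x\<in>A. \<exists>S. S \<subseteq> {a. atom A le a} \<and> is_lub A le S x)"

definition Sdown :: "'a set \<Rightarrow> ('a \<Rightarrow> 'a \<Rightarrow> bool) \<Rightarrow> 'a \<Rightarrow> 'a set" where
  "Sdown A le p = {q. covers A le p q}"

definition uniform :: "'a set \<Rightarrow> ('a \<Rightarrow> 'a \<Rightarrow> bool) \<Rightarrow> bool" where
  "uniform A le \<longleftrightarrow> (\<forall>p\<in>A. rk A le p \<ge> 2 \<longrightarrow>
     (\<forall>x\<in>Sdown A le p. \<forall>y\<in>Sdown A le p.
        (\<lambda>u v. u \<in> Sdown A le p \<and> v \<in> Sdown A le p \<and>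
               Sdown A le u \<inter> Sdown A le v \<noteq> {})\<^sup>*\<^sup>* x y))"

definition Vplus :: "'a set \<Rightarrow> ('a \<Rightarrow> 'a \<Rightarrow> bool) \<Rightarrow> 'a set" where
  "Vplus A le = {v \<in> A. rk A le v \<ge> 1}"

definition geq2 :: "'a set \<Rightarrow> ('a \<Rightarrow> 'a \<Rightarrow> bool) \<Rightarrow> 'a set" where
  "geq2 A le = {v \<in> A. rk A le v \<ge> 2}"

section \<open>Tensor algebra T(V) over a field: finitely supported functions on words\<close>

definition tensor_elems :: "'a set \<Rightarrow> ('a list \<Rightarrow> 'k::field) set" where
  "tensor_elems V = {f. finite {w. f w \<noteq> 0} \<and> (\<forall>w. f w \<noteq> 0 \<longrightarrow> set w \<subseteq> V)}"

definition word :: "'a list \<Rightarrow> ('a list \<Rightarrow> 'k::field)" where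
  "word w = (\<lambda>u. if u = w then 1 else 0)"

definition tadd :: "('a list \<Rightarrow> 'k::field) \<Rightarrow> ('a list \<Rightarrow> 'k) \<Rightarrow> ('a list \<Rightarrow> 'k)" where
  "tadd f g = (\<lambda>w. f w + g w)"

definition tsmult :: "'k::field \<Rightarrow> ('a list \<Rightarrow> 'k) \<Rightarrow> ('a list \<Rightarrow> 'k)" where
  "tsmult c f = (\<lambda>w. c * f w)"

definition tmult :: "('a list \<Rightarrow> 'k::field) \<Rightarrow> ('a list \<Rightarrow> 'k) \<Rightarrow> ('a list \<Rightarrow> 'k)" where
  "tmult f g = (\<lambda>w. \<Sum>i\<le>length w. f (take i w) * g (drop i w))"

text \<open>The two-sided ideal R_B of T(V_+) generated by the defining relations of B(Gamma).\<close>
inductive_set BIdeal :: "'a set \<Rightarrow> ('a \<Rightarrow> 'a \<Rightarrow> bool) \<Rightarrow> ('a list \<Rightarrow> 'k::field) set"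
  for A :: "'a set" and le :: "'a \<Rightarrow> 'a \<Rightarrow> bool" where
  nonedge: "v \<in> Vplus A le \<Longrightarrow> w \<in> Vplus A le \<Longrightarrow> \<not> covers A le v w
             \<Longrightarrow> word [v, w] \<in> BIdeal A le"
| rel: "v \<in> A \<Longrightarrow> rk A le v \<ge> 2
             \<Longrightarrow> (\<lambda>u. \<Sum>w\<in>Sdown A le v. word [v, w] u) \<in> BIdeal A le"
| zero: "(\<lambda>_. 0) \<in> BIdeal A le"
| add: "x \<in> BIdeal A le \<Longrightarrow> y \<in> BIdeal A le \<Longrightarrow> tadd x y \<in> BIdeal A le"
| smult: "x \<in> BIdeal A le \<Longrightarrow> tsmult c x \<in> BIdeal A le"
| lmult: "x \<in> BIdeal A le \<Longrightarrow> set w \<subseteq> Vplus A le \<Longrightarrow> tmult (word w) x \<in> BIdeal A le"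
| rmult: "x \<in> BIdeal A le \<Longrightarrow> set w \<subseteq> Vplus A le \<Longrightarrow> tmult x (word w) \<in> BIdeal A le"

text \<open>congruence modulo R_B (equality in B(Gamma))\<close>
definition Beq :: "'a set \<Rightarrow> ('a \<Rightarrow> 'a \<Rightarrow> bool) \<Rightarrow> ('a list \<Rightarrow> 'k::field) \<Rightarrow> ('a list \<Rightarrow> 'k) \<Rightarrow> bool" where
  "Beq A le x y \<longleftrightarrow> (\<lambda>u. x u - y u) \<in> BIdeal A le"

definition homogeneous :: "'a set \<Rightarrow> ('a \<Rightarrow> 'a \<Rightarrow> bool) \<Rightarrow> nat \<Rightarrow> nat \<Rightarrow> ('a list \<Rightarrow> 'k::field) \<Rightarrow> bool" where
  "homogeneous A le m n x \<longleftrightarrow>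
     (\<forall>w. x w \<noteq> 0 \<longrightarrow> length w = m \<and> sum_list (map (rk A le) w) = n)"

text \<open>phi, acting on representatives, induces a doubly graded algebra isomorphism
  B(P) = T(V_+(P))/R_B(P) \<rightarrow> B(Q) = T(V_+(Q))/R_B(Q).\<close>
definition graded_iso ::
  "'a set \<Rightarrow> ('a \<Rightarrow> 'a \<Rightarrow> bool) \<Rightarrow> 'b set \<Rightarrow> ('b \<Rightarrow> 'b \<Rightarrow> bool)
    \<Rightarrow> (('a list \<Rightarrow> 'k::field) \<Rightarrow> ('b list \<Rightarrow> 'k)) \<Rightarrow> bool" where
  "graded_iso A le B le' \<phi> \<longleftrightarrow>
     (let TP = tensor_elems (Vplus A le); TQ = tensor_elems (Vplus B le') in
     (\<forall>x\<in>TP. \<phi> x \<in> TQ) \<and>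
     (\<forall>x\<in>TP. \<forall>y\<in>TP. Beq A le x y \<longrightarrow> Beq B le' (\<phi> x) (\<phi> y)) \<and>
     (\<forall>x\<in>TP. \<forall>y\<in>TP. Beq B le' (\<phi> (tadd x y)) (tadd (\<phi> x) (\<phi> y))) \<and>
     (\<forall>c. \<forall>x\<in>TP. Beq B le' (\<phi> (tsmult c x)) (tsmult c (\<phi> x))) \<and>
     (\<forall>x\<in>TP. \<forall>y\<in>TP. Beq B le' (\<phi> (tmult x y)) (tmult (\<phi> x) (\<phi> y))) \<and>
     Beq B le' (\<phi> (word [])) (word []) \<and>
     (\<forall>m n. \<forall>x\<in>TP. homogeneous A le m n x \<longrightarrow>
        (\<exists>y\<in>TQ. homogeneous B le' m n y \<and> Beq B le' (\<phi> x) y)) \<and>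
     (\<forall>x\<in>TP. \<forall>y\<in>TP. Beq B le' (\<phi> x) (\<phi> y) \<longrightarrow> Beq A le x y) \<and>
     (\<forall>z\<in>TQ. \<exists>x\<in>TP. Beq B le' (\<phi> x) z))"

definition B_equiv :: "'k::field itself \<Rightarrow> 'b set \<Rightarrow> ('b \<Rightarrow> 'b \<Rightarrow> bool) \<Rightarrow> 'a set \<Rightarrow> ('a \<Rightarrow> 'a \<Rightarrow> bool) \<Rightarrow> bool" where
  "B_equiv K B le' A le \<longleftrightarrow>
     (\<exists>\<phi> :: ('a list \<Rightarrow> 'k) \<Rightarrow> ('b list \<Rightarrow> 'k). graded_iso A le B le' \<phi>)"

end

theory Submission
  imports Defs
begin

lemma tmult_word_left:
  "tmult (word u) g w = (if take (length u) w = u \<and> length u \<le> length w then g (drop (length u) w) else 0)"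
proof -
  have "tmult (word u) g w = (\<Sum>i\<le>length w. (if i = length u then (if take i w = u then g (drop i w) else 0) else 0))"
    unfolding tmult_def word_def
    by (rule sum.cong) (auto simp: min_def split: if_splits)
  also have "\<dots> = (if take (length u) w = u \<and> length u \<le> length w then g (drop (length u) w) else 0)"
    by (simp only: sum.delta finite_atMost) auto
  finally show ?thesis .
qed


lemma tmult_word_right:
  "tmult g (word u) w = (if length u \<le> length w \<and> drop (length w - length u) w = u then g (take (length w - length u) w) else 0)"
proof -
  have "tmult g (word u) w = (\<Sum>i\<le>length w. (if i = length w - length u then (if length u \<le> length w \<and> drop i w = u then g (take i w) else 0) else 0))"
    unfolding tmult_def word_def
    by (rule sum.cong) auto
  also have "\<dots> = (if length u \<le> length w \<and> drop (length w - length u) w = u then g (take (length w - length u) w) else 0)"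
    by (simp only: sum.delta finite_atMost) auto
  finally show ?thesis .
qed


lemma BIdeal_zero': "(\<lambda>_. 0) \<in> BIdeal A le"
  by (rule BIdeal.zero)

lemma BIdeal_sum:
  assumes "finite F" "\<And>i. i \<in> F \<Longrightarrow> g i \<in> BIdeal A le"
  shows "(\<lambda>u. \<Sum>i\<in>F. g i u) \<in> BIdeal A le"
  using assms
proof (induction F rule: finite_induct)
  case empty
  then show ?case by (simp add: BIdeal.zero)
next
  case (insert a F)
  have "tadd (g a) (\<lambda>u. \<Sum>i\<in>F. g i u) \<in> BIdeal A le"
    using insert by (intro BIdeal.add) auto
  then show ?case using insert by (simp add: tadd_def)
qed

lemma BIdeal_diff:
  assumes "x \<in> BIdeal A le" "y \<in> BIdeal A le"
  shows "(\<lambda>u. x u - y u) \<in> BIdeal A le"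
proof -
  have "tadd x (tsmult (-1) y) \<in> BIdeal A le"
    using assms by (intro BIdeal.add BIdeal.smult)
  then show ?thesis by (simp add: tadd_def tsmult_def)
qed

lemma BIdeal_smult': "x \<in> BIdeal A le \<Longrightarrow> (\<lambda>u. c * x u) \<in> BIdeal A le"
  using BIdeal.smult[of x A le c] by (simp add: tsmult_def)

lemma BIdeal_add': "x \<in> BIdeal A le \<Longrightarrow> y \<in> BIdeal A le \<Longrightarrow> (\<lambda>u. x u + y u) \<in> BIdeal A le"
  using BIdeal.add[of x A le y] by (simp add: tadd_def)

lemma Beq_refl: "Beq A le x x"
  by (simp add: Beq_def BIdeal.zero)

lemma Beq_sym: "Beq A le x y \<Longrightarrow> Beq A le y x"
  unfolding Beq_def using BIdeal_smult'[of "\<lambda>u. x u - y u" A le "-1"] by simp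

lemma Beq_trans: "Beq A le x y \<Longrightarrow> Beq A le y z \<Longrightarrow> Beq A le x z"
  unfolding Beq_def using BIdeal_add'[of "\<lambda>u. x u - y u" A le "\<lambda>u. y u - z u"] by simp

lemma Beq_add: "Beq A le x x' \<Longrightarrow> Beq A le y y' \<Longrightarrow> Beq A le (tadd x y) (tadd x' y')"
  unfolding Beq_def tadd_def
  using BIdeal_add'[of "\<lambda>u. x u - x' u" A le "\<lambda>u. y u - y' u"] by (simp add: algebra_simps)

lemma Beq_0_iff: "Beq A le x (\<lambda>_. 0) \<longleftrightarrow> x \<in> BIdeal A le"
  by (simp add: Beq_def)

lemma tensor_repr:
  assumes "x \<in> tensor_elems V"
  shows "x = (\<lambda>w. \<Sum>s\<in>{w. x w \<noteq> 0}. x s * word s w)"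
proof
  fix w
  have fin: "finite {w. x w \<noteq> 0}" using assms by (simp add: tensor_elems_def)
  show "x w = (\<Sum>s\<in>{w. x w \<noteq> 0}. x s * word s w)"
  proof (cases "x w = 0")
    case True
    have "(\<Sum>s\<in>{w. x w \<noteq> 0}. x s * word s w) = 0"
      using True by (intro sum.neutral) (auto simp: word_def)
    then show ?thesis using True by simp
  next
    case False
    then show ?thesis using fin
      by (subst sum.remove[of _ w]) (auto simp: word_def split: if_splits intro!: sum.neutral)
  qed
qed

lemma tmult_sum_right:
  assumes "finite S"
  shows "tmult i (\<lambda>w. \<Sum>s\<in>S. c s * word s w) = (\<lambda>u. \<Sum>s\<in>S. c s * tmult i (word s) u)"
proof
  fix u
  have "tmult i (\<lambda>w. \<Sum>s\<in>S. c s * word s w) u = (\<Sum>k\<le>length u. \<Sum>s\<in>S. i (take k u) * (c s * word s (drop k u)))"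
    unfolding tmult_def by (simp add: sum_distrib_left)
  also have "\<dots> = (\<Sum>s\<in>S. \<Sum>k\<le>length u. c s * (i (take k u) * word s (drop k u)))"
    by (subst sum.swap) (simp add: algebra_simps)
  also have "\<dots> = (\<Sum>s\<in>S. c s * tmult i (word s) u)"
    unfolding tmult_def by (simp add: sum_distrib_left)
  finally show "tmult i (\<lambda>w. \<Sum>s\<in>S. c s * word s w) u = (\<Sum>s\<in>S. c s * tmult i (word s) u)" .
qed

lemma tmult_sum_left:
  assumes "finite S"
  shows "tmult (\<lambda>w. \<Sum>s\<in>S. c s * word s w) i = (\<lambda>u. \<Sum>s\<in>S. c s * tmult (word s) i u)"
proof
  fix u
  have "tmult (\<lambda>w. \<Sum>s\<in>S. c s * word s w) i u = (\<Sum>k\<le>length u. \<Sum>s\<in>S. (c s * word s (take k u)) * i (drop k u))"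
    unfolding tmult_def by (simp add: sum_distrib_right)
  also have "\<dots> = (\<Sum>s\<in>S. \<Sum>k\<le>length u. c s * (word s (take k u) * i (drop k u)))"
    by (subst sum.swap) (simp add: algebra_simps)
  also have "\<dots> = (\<Sum>s\<in>S. c s * tmult (word s) i u)"
    unfolding tmult_def by (simp add: sum_distrib_left)
  finally show "tmult (\<lambda>w. \<Sum>s\<in>S. c s * word s w) i u = (\<Sum>s\<in>S. c s * tmult (word s) i u)" .
qed

lemma ideal_rmult_T:
  assumes "i \<in> BIdeal A le" "y \<in> tensor_elems (Vplus A le)"
  shows "tmult i y \<in> BIdeal A le"
proof -
  have fin: "finite {w. y w \<noteq> 0}" using assms by (simp add: tensor_elems_def)
  have "tmult i y = (\<lambda>u. \<Sum>s\<in>{w. y w \<noteq> 0}. y s * tmult i (word s) u)"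
    by (subst tensor_repr[OF assms(2)]) (rule tmult_sum_right[OF fin])
  also have "\<dots> \<in> BIdeal A le"
  proof (rule BIdeal_sum[OF fin, of "\<lambda>s u. y s * tmult i (word s) u", simplified])
    fix s assume "y s \<noteq> 0"
    then have "set s \<subseteq> Vplus A le" using assms(2) by (auto simp: tensor_elems_def)
    then show "(\<lambda>u. y s * tmult i (word s) u) \<in> BIdeal A le"
      by (intro BIdeal_smult' BIdeal.rmult assms(1))
  qed
  finally show ?thesis .
qed

lemma ideal_lmult_T:
  assumes "i \<in> BIdeal A le" "y \<in> tensor_elems (Vplus A le)"
  shows "tmult y i \<in> BIdeal A le"
proof -
  have fin: "finite {w. y w \<noteq> 0}" using assms by (simp add: tensor_elems_def)
  have "tmult y i = (\<lambda>u. \<Sum>s\<in>{w. y w \<noteq> 0}. y s * tmult (word s) i u)"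
    by (subst tensor_repr[OF assms(2)]) (rule tmult_sum_left[OF fin])
  also have "\<dots> \<in> BIdeal A le"
  proof (rule BIdeal_sum[OF fin, of "\<lambda>s u. y s * tmult (word s) i u", simplified])
    fix s assume "y s \<noteq> 0"
    then have "set s \<subseteq> Vplus A le" using assms(2) by (auto simp: tensor_elems_def)
    then show "(\<lambda>u. y s * tmult (word s) i u) \<in> BIdeal A le"
      by (intro BIdeal_smult' BIdeal.lmult assms(1))
  qed
  finally show ?thesis .
qed

lemma tmult_diff_left: "(\<lambda>u. tmult x y u - tmult x' y u) = tmult (\<lambda>u. x u - x' u) y"
  unfolding tmult_def by (auto simp: algebra_simps sum_subtractf)

lemma tmult_diff_right: "(\<lambda>u. tmult x y u - tmult x y' u) = tmult x (\<lambda>u. y u - y' u)"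
  unfolding tmult_def by (auto simp: algebra_simps sum_subtractf)

lemma Beq_mult:
  assumes "Beq A le x x'" "Beq A le y y'"
    and "x' \<in> tensor_elems (Vplus A le)" "y \<in> tensor_elems (Vplus A le)"
  shows "Beq A le (tmult x y) (tmult x' y')"
proof -
  have 1: "tmult (\<lambda>u. x u - x' u) y \<in> BIdeal A le"
    using assms by (intro ideal_rmult_T) (auto simp: Beq_def)
  have 2: "tmult x' (\<lambda>u. y u - y' u) \<in> BIdeal A le"
    using assms by (intro ideal_lmult_T) (auto simp: Beq_def)
  have "(\<lambda>u. tmult x y u - tmult x' y' u) = (\<lambda>u. tmult (\<lambda>u. x u - x' u) y u + tmult x' (\<lambda>u. y u - y' u) u)"
    by (simp add: tmult_diff_left[symmetric] tmult_diff_right[symmetric])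
  then show ?thesis using BIdeal_add'[OF 1 2] by (simp add: Beq_def)
qed

lemma tensor_zero: "(\<lambda>_. 0) \<in> tensor_elems V"
  by (simp add: tensor_elems_def)

lemma tensor_word: "set w \<subseteq> V \<Longrightarrow> word w \<in> tensor_elems V"
  by (auto simp: tensor_elems_def word_def)

lemma tensor_add: "x \<in> tensor_elems V \<Longrightarrow> y \<in> tensor_elems V \<Longrightarrow> tadd x y \<in> tensor_elems V"
proof -
  assume x: "x \<in> tensor_elems V" and y: "y \<in> tensor_elems V"
  have "{w. tadd x y w \<noteq> 0} \<subseteq> {w. x w \<noteq> 0} \<union> {w. y w \<noteq> 0}" by (auto simp: tadd_def)
  moreover have "finite ({w. x w \<noteq> 0} \<union> {w. y w \<noteq> 0})" using x y by (simp add: tensor_elems_def)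
  moreover have "set w \<subseteq> V" if "tadd x y w \<noteq> 0" for w
  proof (cases "x w = 0")
    case True then have "y w \<noteq> 0" using that by (simp add: tadd_def)
    then show ?thesis using y by (simp add: tensor_elems_def)
  next
    case False then show ?thesis using x by (simp add: tensor_elems_def)
  qed
  ultimately show ?thesis unfolding tensor_elems_def by (auto intro: finite_subset)
qed

lemma tensor_smult: "x \<in> tensor_elems V \<Longrightarrow> tsmult c x \<in> tensor_elems V"
  unfolding tensor_elems_def tsmult_def
  by (auto elim!: finite_subset[rotated])

lemma tensor_mult:
  assumes "x \<in> tensor_elems V" "y \<in> tensor_elems V"
  shows "tmult x y \<in> tensor_elems V"
proof -
  let ?S = "(\<lambda>(a,b). a @ b) ` ({w. x w \<noteq> 0} \<times> {w. y w \<noteq> 0})"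
  have sub: "{w. tmult x y w \<noteq> 0} \<subseteq> ?S"
  proof
    fix w assume "w \<in> {w. tmult x y w \<noteq> 0}"
    then obtain i where "x (take i w) * y (drop i w) \<noteq> 0"
      unfolding tmult_def by (auto elim: sum.not_neutral_contains_not_neutral)
    then show "w \<in> ?S" by (auto intro!: image_eqI[of _ _ "(take i w, drop i w)"])
  qed
  have "finite ?S" using assms by (auto simp: tensor_elems_def)
  moreover have "set w \<subseteq> V" if "tmult x y w \<noteq> 0" for w
  proof -
    from that sub obtain a b where "w = a @ b" "x a \<noteq> 0" "y b \<noteq> 0" by auto
    then show ?thesis using assms by (auto simp: tensor_elems_def)
  qed
  ultimately show ?thesis using sub unfolding tensor_elems_def by (auto intro: finite_subset)
qed

lemma tmult_word_left_short:
  assumes "\<forall>w. length w < 2 \<longrightarrow> x w = 0" "length w \<le> 2" "u \<noteq> []"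
  shows "tmult (word u) x w = 0"
proof -
  have "length u \<ge> 1" using assms(3) by (cases u) auto
  then have "length (drop (length u) w) < 2" using assms(2) by simp
  then show ?thesis using assms(1) by (simp add: tmult_word_left)
qed

lemma tmult_word_right_short:
  assumes "\<forall>w. length w < 2 \<longrightarrow> x w = 0" "length w \<le> 2" "u \<noteq> []"
  shows "tmult x (word u) w = 0"
proof -
  have "length u \<ge> 1" using assms(3) by (cases u) auto
  then have "length (take (length w - length u) w) < 2" using assms(2) by simp
  then show ?thesis using assms(1) by (simp add: tmult_word_right)
qed

lemma tmult_word_nil_left: "tmult (word []) x = x"
  by (rule ext) (simp add: tmult_word_left)

lemma tmult_word_nil_right: "tmult x (word []) = x"
  by (rule ext) (simp add: tmult_word_right)

lemma sum_word2:
  "(\<Sum>w\<in>S. word [v0, w] [v, s]) = (if v = v0 \<and> s \<in> S \<and> finite S then (1::'k::field) else 0)"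
proof (cases "finite S")
  case True
  have "(\<Sum>w\<in>S. word [v0, w] [v, s]) = (\<Sum>w\<in>S. if w = s then (if v = v0 then (1::'k) else 0) else 0)"
    by (rule sum.cong) (auto simp: word_def)
  also have "\<dots> = (if v = v0 \<and> s \<in> S \<and> finite S then 1 else 0)"
    using True by (simp add: sum.delta)
  finally show ?thesis .
qed simp

definition L2prop :: "'a set \<Rightarrow> ('a \<Rightarrow> 'a \<Rightarrow> bool) \<Rightarrow> ('a list \<Rightarrow> 'k::field) \<Rightarrow> bool" where
  "L2prop A le x \<longleftrightarrow> (\<forall>w. length w < 2 \<longrightarrow> x w = 0) \<and>
     (\<forall>v s t. v \<in> A \<longrightarrow> rk A le v \<ge> 2 \<longrightarrow> s \<in> Sdown A le v \<longrightarrow> t \<in> Sdown A le v \<longrightarrow> x [v, s] = x [v, t])"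

lemma BIdeal_L2:
  assumes "x \<in> BIdeal A le"
  shows "L2prop A le x"
  using assms
proof (induction rule: BIdeal.induct)
  case (nonedge v w)
  show ?case unfolding L2prop_def
  proof (intro conjI allI impI)
    fix u :: "'a list" assume "length u < 2"
    then show "word [v, w] u = 0" by (auto simp: word_def)
  next
    fix v' s t assume "s \<in> Sdown A le v'" "t \<in> Sdown A le v'"
    then show "word [v, w] [v', s] = word [v, w] [v', t]"
      using nonedge(3) unfolding word_def Sdown_def by auto
  qed
next
  case (rel v)
  show ?case unfolding L2prop_def
  proof (intro conjI allI impI)
    fix u :: "'a list" assume "length u < 2"
    then show "(\<lambda>u. \<Sum>w\<in>Sdown A le v. word [v, w] u) u = 0"
      unfolding word_def by (intro sum.neutral) auto
  next
    fix v' s t assume "s \<in> Sdown A le v'" "t \<in> Sdown A le v'"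
    then show "(\<lambda>u. \<Sum>w\<in>Sdown A le v. word [v, w] u) [v', s] = (\<lambda>u. \<Sum>w\<in>Sdown A le v. word [v, w] u) [v', t]"
      unfolding sum_word2 by auto
  qed
next
  case zero
  then show ?case unfolding L2prop_def by simp
next
  case (add x y)
  show ?case unfolding L2prop_def tadd_def
  proof (intro conjI allI impI)
    fix u :: "'a list" assume "length u < 2"
    then show "x u + y u = 0" using add(3,4) unfolding L2prop_def by simp
  next
    fix v s t assume h: "v \<in> A" "2 \<le> rk A le v" "s \<in> Sdown A le v" "t \<in> Sdown A le v"
    have "x [v, s] = x [v, t]" "y [v, s] = y [v, t]"
      using add(3,4) h unfolding L2prop_def by blast+
    then show "x [v, s] + y [v, s] = x [v, t] + y [v, t]" by simp
  qed
next
  case (smult x c)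
  show ?case unfolding L2prop_def tsmult_def
  proof (intro conjI allI impI)
    fix u :: "'a list" assume "length u < 2"
    then show "c * x u = 0" using smult(2) unfolding L2prop_def by simp
  next
    fix v s t assume h: "v \<in> A" "2 \<le> rk A le v" "s \<in> Sdown A le v" "t \<in> Sdown A le v"
    have "x [v, s] = x [v, t]"
      using smult(2) h unfolding L2prop_def by blast
    then show "c * x [v, s] = c * x [v, t]" by simp
  qed
next
  case (lmult x w)
  have x0: "\<forall>w. length w < 2 \<longrightarrow> x w = 0" using lmult.IH unfolding L2prop_def by blast
  show ?case
  proof (cases "w = []")
    case True then show ?thesis using lmult.IH by (simp only: tmult_word_nil_left)
  next
    case False
    show ?thesis unfolding L2prop_def
    proof (intro conjI allI impI)
      fix u :: "'a list" assume "length u < 2"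
      then show "tmult (word w) x u = 0" using tmult_word_left_short[OF x0 _ False] by simp
    next
      fix v' s t
      show "tmult (word w) x [v', s] = tmult (word w) x [v', t]"
        using tmult_word_left_short[OF x0 _ False, of "[v', s]"] tmult_word_left_short[OF x0 _ False, of "[v', t]"]
        by simp
    qed
  qed
next
  case (rmult x w)
  have x0: "\<forall>w. length w < 2 \<longrightarrow> x w = 0" using rmult.IH unfolding L2prop_def by blast
  show ?case
  proof (cases "w = []")
    case True then show ?thesis using rmult.IH by (simp only: tmult_word_nil_right)
  next
    case False
    show ?thesis unfolding L2prop_def
    proof (intro conjI allI impI)
      fix u :: "'a list" assume "length u < 2"
      then show "tmult x (word w) u = 0" using tmult_word_right_short[OF x0 _ False] by simp
    next
      fix v' s t
      show "tmult x (word w) [v', s] = tmult x (word w) [v', t]"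
        using tmult_word_right_short[OF x0 _ False, of "[v', s]"] tmult_word_right_short[OF x0 _ False, of "[v', t]"]
        by simp
    qed
  qed
qed

section \<open>Ranks\<close>

lemma rk_fun: "ranked A le \<Longrightarrow> rank_function A le (rk A le)"
proof -
  assume "ranked A le"
  then obtain r where "rank_function A le r" unfolding ranked_def by blast
  then show ?thesis unfolding rk_def by (metis someI)
qed

lemma rk_cov: "ranked A le \<Longrightarrow> covers A le p q \<Longrightarrow> rk A le p = Suc (rk A le q)"
  using rk_fun[of A le] unfolding rank_function_def covers_def by auto

lemma rk0: "ranked A le \<Longrightarrow> x \<in> A \<Longrightarrow> rk A le x = 0 \<longleftrightarrow> minimal_el A le x"
  using rk_fun[of A le] unfolding rank_function_def by auto

lemma Sdown_sub: "Sdown A le p \<subseteq> A"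
  by (auto simp: Sdown_def covers_def)

lemma Sdown_Vplus:
  assumes "ranked A le" "rk A le p \<ge> 2" "s \<in> Sdown A le p"
  shows "s \<in> Vplus A le" "rk A le s = rk A le p - 1"
  using rk_cov[OF assms(1), of p s] assms Sdown_sub[of A le p]
  by (auto simp: Sdown_def Vplus_def)

section \<open>Vectors: homogeneous elements of bidegree (1,n)\<close>

definition vec :: "'a set \<Rightarrow> ('a \<Rightarrow> 'a \<Rightarrow> bool) \<Rightarrow> nat \<Rightarrow> ('a list \<Rightarrow> 'k::field) \<Rightarrow> bool" where
  "vec A le n x \<longleftrightarrow> x \<in> tensor_elems (Vplus A le) \<and> homogeneous A le 1 n x"

lemma vec_support:
  assumes "vec A le n x" "x w \<noteq> 0"
  shows "\<exists>a. w = [a] \<and> a \<in> Vplus A le \<and> rk A le a = n"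
proof -
  have "length w = 1" "sum_list (map (rk A le) w) = n" "set w \<subseteq> Vplus A le"
    using assms by (auto simp: vec_def homogeneous_def tensor_elems_def)
  then show ?thesis by (cases w) auto
qed

lemma vec_support1:
  assumes "vec A le n x" "x [a] \<noteq> 0"
  shows "a \<in> Vplus A le" "rk A le a = n" "a \<in> A"
  using vec_support[OF assms] by (auto simp: Vplus_def)

lemma vec_zero_nonlen1: "vec A le n x \<Longrightarrow> length w \<noteq> 1 \<Longrightarrow> x w = 0"
  using vec_support[of A le n x w] by force

lemma vec_eqI:
  assumes "vec A le n x" "vec A le n y" "\<And>a. x [a] = y [a]"
  shows "x = y"
proof
  fix w show "x w = y w"
  proof (cases "length w = 1")
    case True then obtain a where "w = [a]" by (cases w) auto
    then show ?thesis using assms by simp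
  next
    case False then show ?thesis using vec_zero_nonlen1[OF assms(1)] vec_zero_nonlen1[OF assms(2)] by simp
  qed
qed

lemma vec_word:
  assumes "a \<in> Vplus A le" "rk A le a = n"
  shows "vec A le n (word [a])"
  unfolding vec_def
proof
  show "word [a] \<in> tensor_elems (Vplus A le)" using assms by (intro tensor_word) auto
  show "homogeneous A le 1 n (word [a])" using assms by (auto simp: homogeneous_def word_def split: if_splits)
qed

lemma vec_add: "vec A le n x \<Longrightarrow> vec A le n y \<Longrightarrow> vec A le n (tadd x y)"
  unfolding vec_def homogeneous_def
  by (auto simp: tensor_add) (metis add.right_neutral add_0 tadd_def)+

lemma vec_smult: "vec A le n x \<Longrightarrow> vec A le n (tsmult c x)"
  unfolding vec_def homogeneous_def
  by (auto simp: tensor_smult) (auto simp: tsmult_def)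

lemma vec_zero: "vec A le n (\<lambda>_. 0)"
  by (simp add: vec_def homogeneous_def tensor_zero)

lemma vec_Beq_eq:
  assumes "vec A le n x" "vec A le n y" "Beq A le x y"
  shows "x = y"
proof (rule vec_eqI[OF assms(1,2)])
  fix a
  have "L2prop A le (\<lambda>u. x u - y u)" using assms(3) BIdeal_L2 by (auto simp: Beq_def)
  then have "x [a] - y [a] = 0" unfolding L2prop_def by force
  then show "x [a] = y [a]" by simp
qed

lemma tmult_vec:
  assumes "vec A le n x" "vec A le m b"
  shows "tmult x b = (\<lambda>w. if length w = 2 then x [w!0] * b [w!1] else 0)"
proof
  fix w
  show "tmult x b w = (if length w = 2 then x [w!0] * b [w!1] else 0)"
  proof (cases "length w = 2")
    case True
    then obtain a c where w: "w = [a, c]"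
      by (cases w; cases "tl w") auto
    have "tmult x b w = x [] * b [a, c] + x [a] * b [c] + x [a, c] * b []"
      unfolding tmult_def w by (simp add: numeral_2_eq_2 atMost_Suc)
    also have "\<dots> = x [a] * b [c]"
      using vec_zero_nonlen1[OF assms(1), of "[]"] vec_zero_nonlen1[OF assms(1), of "[a,c]"]
        vec_zero_nonlen1[OF assms(2), of "[]"] by simp
    finally show ?thesis using w by simp
  next
    case False
    note nl = this
    have "x (take i w) * b (drop i w) = 0" if "i \<le> length w" for i
    proof (cases "length (take i w) = 1 \<and> length (drop i w) = 1")
      case True
      then have "length w = 2" using that by (simp add: min_def split: if_splits; linarith)
      then show ?thesis using nl by simp
    next
      case False
      then show ?thesis using vec_zero_nonlen1[OF assms(1)] vec_zero_nonlen1[OF assms(2)] by auto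
    qed
    then show ?thesis using False unfolding tmult_def by (simp add: sum.neutral)
  qed
qed



lemma BIdeal_zero_fun: "g = (\<lambda>_. 0) \<Longrightarrow> g \<in> BIdeal A le"
  by (simp add: BIdeal.zero)

lemma C2:
  assumes rk: "ranked A le" and fin: "finite A" and n: "n \<ge> 2"
    and x: "vec A le n x" and b: "vec A le (n-1) b"
  shows "tmult x b \<in> BIdeal A le \<longleftrightarrow>
    (\<forall>z. x [z] \<noteq> 0 \<longrightarrow> (\<forall>s\<in>Sdown A le z. \<forall>t\<in>Sdown A le z. b [s] = b [t]))"
proof
  assume I: "tmult x b \<in> BIdeal A le"
  show "\<forall>z. x [z] \<noteq> 0 \<longrightarrow> (\<forall>s\<in>Sdown A le z. \<forall>t\<in>Sdown A le z. b [s] = b [t])"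
  proof (intro allI impI ballI)
    fix z s t assume xz: "x [z] \<noteq> 0" and st: "s \<in> Sdown A le z" "t \<in> Sdown A le z"
    have zA: "z \<in> A" "rk A le z = n" using vec_support1[OF x xz] by auto
    have L: "L2prop A le (tmult x b)" by (rule BIdeal_L2[OF I])
    have "tmult x b [z, s] = tmult x b [z, t]"
      using L zA n st unfolding L2prop_def by blast
    then have "x [z] * b [s] = x [z] * b [t]" using tmult_vec[OF x b] by simp
    then show "b [s] = b [t]" using xz by simp
  qed
next
  assume H: "\<forall>z. x [z] \<noteq> 0 \<longrightarrow> (\<forall>s\<in>Sdown A le z. \<forall>t\<in>Sdown A le z. b [s] = b [t])"
  have eq: "tmult x b = (\<lambda>u. \<Sum>z\<in>A. (\<lambda>z u. \<Sum>s\<in>A. x [z] * b [s] * word [z, s] u) z u)"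
  proof
    fix u
    show "tmult x b u = (\<Sum>z\<in>A. (\<lambda>z u. \<Sum>s\<in>A. x [z] * b [s] * word [z, s] u) z u)"
    proof (cases "length u = 2")
      case True
      then obtain a c where u: "u = [a, c]" by (cases u; cases "tl u") auto
      have "(\<Sum>z\<in>A. \<Sum>s\<in>A. x [z] * b [s] * word [z, s] u)
          = (\<Sum>z\<in>A. if z = a then (\<Sum>s\<in>A. if s = c then x [a] * b [c] else 0) else 0)"
        unfolding u word_def by (intro sum.cong refl) (auto intro!: sum.cong)
      also have "\<dots> = (if a \<in> A \<and> c \<in> A then x [a] * b [c] else 0)"
        using fin by (simp add: sum.delta)
      also have "\<dots> = x [a] * b [c]"
        using vec_support1(3)[OF x, of a] vec_support1(3)[OF b, of c] by auto
      finally show ?thesis using tmult_vec[OF x b] u by simp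
    next
      case False
      then have "u \<noteq> [z, s]" for z s :: 'a by auto
      then show ?thesis using tmult_vec[OF x b] False by (simp add: word_def)
    qed
  qed
  show "tmult x b \<in> BIdeal A le"
    unfolding eq
  proof (rule BIdeal_sum[OF fin])
    fix z assume "z \<in> A"
    show "(\<lambda>u. \<Sum>s\<in>A. x [z] * b [s] * word [z, s] u) \<in> BIdeal A le"
    proof (cases "x [z] = 0")
      case True
      then show ?thesis by (intro BIdeal_zero_fun) simp
    next
      case False
      have zV: "z \<in> Vplus A le" "rk A le z = n" "z \<in> A" using vec_support1[OF x False] by auto
      let ?Sd = "Sdown A le z"
      have SdA: "?Sd \<subseteq> A" by (rule Sdown_sub)
      have split: "(\<lambda>u. \<Sum>s\<in>A. x [z] * b [s] * word [z, s] u)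
         = (\<lambda>u. (\<Sum>s\<in>?Sd. x [z] * b [s] * word [z, s] u) + (\<Sum>s\<in>A - ?Sd. x [z] * b [s] * word [z, s] u))"
        using sum.subset_diff[OF SdA fin] by (auto simp: add.commute)
      have p1: "(\<lambda>u. \<Sum>s\<in>?Sd. x [z] * b [s] * word [z, s] u) \<in> BIdeal A le"
      proof (cases "?Sd = {}")
        case True then show ?thesis by (intro BIdeal_zero_fun) simp
      next
        case False
        then obtain s0 where s0: "s0 \<in> ?Sd" by blast
        have bs: "b [s] = b [s0]" if "s \<in> ?Sd" for s
          using H \<open>x [z] \<noteq> 0\<close> s0 that by blast
        have "(\<lambda>u. \<Sum>s\<in>?Sd. x [z] * b [s] * word [z, s] u) = (\<lambda>u. (x [z] * b [s0]) * (\<Sum>s\<in>?Sd. word [z, s] u))"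
        proof
          fix u
          have "(\<Sum>s\<in>?Sd. x [z] * b [s] * word [z, s] u) = (\<Sum>s\<in>?Sd. (x [z] * b [s0]) * word [z, s] u)"
            by (rule sum.cong[OF refl]) (simp only: bs)
          then show "(\<Sum>s\<in>?Sd. x [z] * b [s] * word [z, s] u) = (x [z] * b [s0]) * (\<Sum>s\<in>?Sd. word [z, s] u)"
            by (simp add: sum_distrib_left)
        qed
        also have "\<dots> \<in> BIdeal A le"
          using zV n by (intro BIdeal_smult' BIdeal.rel) auto
        finally show ?thesis .
      qed
      have p2: "(\<lambda>u. \<Sum>s\<in>A - ?Sd. x [z] * b [s] * word [z, s] u) \<in> BIdeal A le"
      proof (rule BIdeal_sum)
        show "finite (A - ?Sd)" using fin by simp
      next
        fix s assume s: "s \<in> A - ?Sd"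
        show "(\<lambda>u. x [z] * b [s] * word [z, s] u) \<in> BIdeal A le"
        proof (cases "b [s] = 0")
          case True then show ?thesis by (intro BIdeal_zero_fun) simp
        next
          case False
          have "s \<in> Vplus A le" using vec_support1[OF b False] by auto
          moreover have "\<not> covers A le z s" using s by (auto simp: Sdown_def)
          ultimately show ?thesis using zV by (intro BIdeal_smult' BIdeal.nonedge) auto
        qed
      qed
      show ?thesis unfolding split by (rule BIdeal_add'[OF p1 p2])
    qed
  qed
qed

section \<open>Finite posets\<close>

lemma po_trans: "is_poset A le \<Longrightarrow> x \<in> A \<Longrightarrow> y \<in> A \<Longrightarrow> z \<in> A \<Longrightarrow> le x y \<Longrightarrow> le y z \<Longrightarrow> le x z"
  unfolding is_poset_def by blast
lemma po_refl: "is_poset A le \<Longrightarrow> x \<in> A \<Longrightarrow> le x x"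
  unfolding is_poset_def by blast
lemma po_antisym: "is_poset A le \<Longrightarrow> x \<in> A \<Longrightarrow> y \<in> A \<Longrightarrow> le x y \<Longrightarrow> le y x \<Longrightarrow> x = y"
  unfolding is_poset_def by blast

lemma exists_cover_above:
  assumes fin: "finite A" and po: "is_poset A le" and a: "a \<in> A" and u: "u \<in> A"
    and au: "le a u" "a \<noteq> u"
  shows "\<exists>c. covers A le u c \<and> le a c"
proof -
  let ?S = "{z\<in>A. le a z \<and> le z u \<and> z \<noteq> u}"
  let ?f = "\<lambda>c. card {t\<in>A. le t c}"
  have Sfin: "finite ?S" using fin by simp
  have Sne: "a \<in> ?S" using a au po_refl[OF po a] by auto
  obtain c where c: "c \<in> ?S" and cmax: "\<forall>z\<in>?S. ?f z \<le> ?f c"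
    using Sfin Sne
  proof -
    have "finite (?f ` ?S)" "?f ` ?S \<noteq> {}" using Sfin Sne by auto
    then have "Max (?f ` ?S) \<in> ?f ` ?S" by (rule Max_in)
    then obtain c where "c \<in> ?S" "?f c = Max (?f ` ?S)" by auto
    moreover have "\<forall>z\<in>?S. ?f z \<le> ?f c" using calculation Sfin by (simp add: Max_ge)
    ultimately show ?thesis using that by blast
  qed
  have "covers A le u c"
    unfolding covers_def
  proof (intro conjI)
    show "u \<in> A" "c \<in> A" "le c u" "u \<noteq> c" using u c by auto
    show "\<not> (\<exists>z\<in>A. le c z \<and> le z u \<and> z \<noteq> c \<and> z \<noteq> u)"
    proof
      assume "\<exists>z\<in>A. le c z \<and> le z u \<and> z \<noteq> c \<and> z \<noteq> u"
      then obtain z where z: "z \<in> A" "le c z" "le z u" "z \<noteq> c" "z \<noteq> u" by blast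
      have zS: "z \<in> ?S" using z c po_trans[OF po a c[THEN CollectD, THEN conjunct1] z(1)] by blast
      have sub: "{t\<in>A. le t c} \<subset> {t\<in>A. le t z}"
      proof
        have cA: "c \<in> A" using c by blast
        show "{t\<in>A. le t c} \<subseteq> {t\<in>A. le t z}" using z cA po_trans[OF po _ cA z(1)] by blast
        have "z \<in> {t\<in>A. le t z}" using z po_refl[OF po z(1)] by blast
        moreover have "z \<notin> {t\<in>A. le t c}" using z cA po_antisym[OF po z(1) cA] by blast
        ultimately show "{t\<in>A. le t c} \<noteq> {t\<in>A. le t z}" by blast
      qed
      have "?f c < ?f z" using psubset_card_mono[OF _ sub] fin by simp
      then show False using cmax zS by force
    qed
  qed
  then show ?thesis using c by blast
qed

lemma rk_mono:
  assumes fin: "finite A" and po: "is_poset A le" and rk: "ranked A le"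
  shows "x \<in> A \<Longrightarrow> y \<in> A \<Longrightarrow> le x y \<Longrightarrow> rk A le x \<le> rk A le y"
proof (induction "rk A le y" arbitrary: y rule: less_induct)
  case less
  show ?case
  proof (cases "x = y")
    case True then show ?thesis by simp
  next
    case False
    obtain c where c: "covers A le y c" "le x c" using exists_cover_above[OF fin po less.prems(1,2,3) False] by blast
    have "rk A le y = Suc (rk A le c)" by (rule rk_cov[OF rk c(1)])
    moreover have "c \<in> A" using c by (simp add: covers_def)
    ultimately show ?thesis using less.hyps[of c] less.prems c by simp
  qed
qed

definition Rg2 :: "'a set \<Rightarrow> ('a \<Rightarrow> 'a \<Rightarrow> bool) \<Rightarrow> 'a \<Rightarrow> 'a \<Rightarrow> bool" where
  "Rg2 A le p q \<longleftrightarrow> covers A le p q \<and> p \<in> geq2 A le \<and> q \<in> geq2 A le"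

lemma le_chain:
  assumes fin: "finite A" and po: "is_poset A le" and rk: "ranked A le"
  shows "x \<in> geq2 A le \<Longrightarrow> y \<in> A \<Longrightarrow> le x y \<Longrightarrow> (Rg2 A le)\<^sup>*\<^sup>* y x"
proof (induction "rk A le y" arbitrary: y rule: less_induct)
  case less
  have xA: "x \<in> A" using less.prems by (simp add: geq2_def)
  show ?case
  proof (cases "x = y")
    case True then show ?thesis by simp
  next
    case False
    obtain c where c: "covers A le y c" "le x c" using exists_cover_above[OF fin po xA less.prems(2,3) False] by blast
    have ry: "rk A le y = Suc (rk A le c)" by (rule rk_cov[OF rk c(1)])
    have cA: "c \<in> A" using c by (simp add: covers_def)
    have "rk A le x \<le> rk A le c" using rk_mono[OF fin po rk xA cA c(2)] .
    then have cg: "c \<in> geq2 A le" and yg: "y \<in> geq2 A le" using less.prems cA ry by (auto simp: geq2_def)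
    have "(Rg2 A le)\<^sup>*\<^sup>* c x" using less.hyps[of c] less.prems cA c ry by simp
    moreover have "Rg2 A le y c" using c cg yg by (simp add: Rg2_def)
    ultimately show ?thesis by (simp add: converse_rtranclp_into_rtranclp)
  qed
qed

lemma chain_le:
  assumes po: "is_poset A le"
  shows "(Rg2 A le)\<^sup>*\<^sup>* y x \<Longrightarrow> y \<in> A \<Longrightarrow> le x y"
proof (induction rule: rtranclp_induct)
  case base then show ?case using po_refl[OF po] by simp
next
  case (step z x)
  have zx: "covers A le z x" using step.hyps(2) by (simp add: Rg2_def)
  have 1: "le x z" "x \<in> A" "z \<in> A" using zx by (auto simp: covers_def)
  have 2: "le z y" using step.IH step.prems by blast
  show ?case using po_trans[OF po 1(2,3) step.prems 1(1) 2] .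
qed

lemma le_iff_chain:
  assumes fin: "finite A" and po: "is_poset A le" and rk: "ranked A le"
    and x: "x \<in> geq2 A le" and y: "y \<in> geq2 A le"
  shows "le x y \<longleftrightarrow> (Rg2 A le)\<^sup>*\<^sup>* y x"
proof
  assume "le x y" then show "(Rg2 A le)\<^sup>*\<^sup>* y x" using le_chain[OF fin po rk x] y by (simp add: geq2_def)
next
  assume "(Rg2 A le)\<^sup>*\<^sup>* y x" then show "le x y" using chain_le[OF po] y by (simp add: geq2_def)
qed

section \<open>Atomic lattices\<close>

lemma lat_Sdown_notsub:
  assumes lat: "is_lattice A le" and u: "u \<in> A" and v: "v \<in> A"
    and s12: "s1 \<in> Sdown A le u" "s2 \<in> Sdown A le u" "s1 \<noteq> s2"
    and sub: "Sdown A le u \<subseteq> Sdown A le v"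
  shows "u = v"
proof -
  have po: "is_poset A le" using lat by (simp add: is_lattice_def)
  have c1: "covers A le u s1" "covers A le u s2" using s12 by (auto simp: Sdown_def)
  have c2: "covers A le v s1" "covers A le v s2" using s12 sub by (auto simp: Sdown_def)
  have sA: "s1 \<in> A" "s2 \<in> A" using c1 by (auto simp: covers_def)
  obtain j where j: "is_lub A le {s1, s2} j" using lat sA unfolding is_lattice_def by blast
  have jA: "j \<in> A" and js: "le s1 j" "le s2 j" using j by (auto simp: is_lub_def)
  have ju: "le j u" using j c1 u by (auto simp: is_lub_def covers_def)
  have jv: "le j v" using j c2 v by (auto simp: is_lub_def covers_def)
  have jn: "j \<noteq> s1"
  proof
    assume "j = s1"
    then have "le s2 s1" using js by simp
    moreover have "le s1 u" using c1 by (simp add: covers_def)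
    ultimately show False using c1(2) sA s12(3) c1(1) unfolding covers_def by blast
  qed
  have "j = u" using c1(1) jA js ju jn unfolding covers_def by blast
  moreover have "j = v" using c2(1) jA js jv jn unfolding covers_def by blast
  ultimately show ?thesis by simp
qed

lemma lat_two_covers:
  assumes fin: "finite A" and lat: "is_lattice A le" and at: "atomic A le" and rk: "ranked A le"
    and v: "v \<in> A" "rk A le v \<ge> 2"
  shows "\<exists>s t. s \<in> Sdown A le v \<and> t \<in> Sdown A le v \<and> s \<noteq> t"
proof (rule ccontr)
  assume H: "\<not> ?thesis"
  have po: "is_poset A le" using lat by (simp add: is_lattice_def)
  have "\<not> minimal_el A le v" using rk0[OF rk v(1)] v(2) by simp
  then obtain y where y: "y \<in> A" "le y v" "y \<noteq> v" using v unfolding minimal_el_def by blast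
  obtain w where w: "covers A le v w" using exists_cover_above[OF fin po y(1) v(1) y(2,3)] by blast
  have wA: "w \<in> A" and wv: "le w v" "w \<noteq> v" using w by (auto simp: covers_def)
  have onlyw: "c = w" if "covers A le v c" for c using H w that by (auto simp: Sdown_def)
  obtain S where S: "S \<subseteq> {a. atom A le a}" "is_lub A le S v" using at v unfolding atomic_def by blast
  have "le a w" if "a \<in> S" for a
  proof -
    have "atom A le a" using S that by blast
    then obtain z where z: "z \<in> A" "\<forall>y\<in>A. le z y" "covers A le a z" unfolding atom_def by blast
    have zmin: "minimal_el A le z" using z po_antisym[OF po] unfolding minimal_el_def by blast
    have "rk A le a = Suc (rk A le z)" using rk_cov[OF rk z(3)] .
    moreover have "rk A le z = 0" using rk0[OF rk z(1)] zmin by simp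
    ultimately have "a \<noteq> v" using v(2) by auto
    moreover have aA: "a \<in> A" using z by (simp add: covers_def)
    moreover have "le a v" using S that by (simp add: is_lub_def)
    ultimately obtain c where "covers A le v c" "le a c" using exists_cover_above[OF fin po aA v(1)] by blast
    then show ?thesis using onlyw by blast
  qed
  then have "le v w" using S wA by (simp add: is_lub_def)
  then show False using po_antisym[OF po v(1) wA] wv by blast
qed



lemmas [trans] = Beq_trans

lemma GL:
  assumes rk: "ranked A le" and fin: "finite A" and n: "n \<ge> 2"
    and c: "c \<noteq> 0" and d: "d \<noteq> 0"
    and z: "z \<in> A" "rk A le z = n" and w: "w \<in> A" "rk A le w = n - 1"
    and two: "\<exists>p q. p \<in> Sdown A le z \<and> q \<in> Sdown A le z \<and> p \<noteq> q"
  shows "tmult (tsmult c (word [z])) (tsmult d (word [w])) \<in> BIdeal A le \<longleftrightarrow> \<not> covers A le z w"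
proof -
  have zv: "vec A le n (tsmult c (word [z]))" using z n by (intro vec_smult vec_word) (auto simp: Vplus_def)
  have wv: "vec A le (n - 1) (tsmult d (word [w]))" using w n by (intro vec_smult vec_word) (auto simp: Vplus_def)
  have "tmult (tsmult c (word [z])) (tsmult d (word [w])) \<in> BIdeal A le \<longleftrightarrow>
    (\<forall>p\<in>Sdown A le z. \<forall>q\<in>Sdown A le z. tsmult d (word [w]) [p] = tsmult d (word [w]) [q])"
    unfolding C2[OF rk fin n zv wv] using c by (auto simp: tsmult_def word_def)
  also have "\<dots> \<longleftrightarrow> w \<notin> Sdown A le z"
  proof
    assume H: "\<forall>p\<in>Sdown A le z. \<forall>q\<in>Sdown A le z. tsmult d (word [w]) [p] = tsmult d (word [w]) [q]"
    show "w \<notin> Sdown A le z"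
    proof
      assume ws: "w \<in> Sdown A le z"
      obtain q where "q \<in> Sdown A le z" "q \<noteq> w" using two by blast
      then have "tsmult d (word [w]) [w] = tsmult d (word [w]) [q]" using H ws by blast
      then show False using d \<open>q \<noteq> w\<close> by (simp add: tsmult_def word_def)
    qed
  next
    assume "w \<notin> Sdown A le z"
    then show "\<forall>p\<in>Sdown A le z. \<forall>q\<in>Sdown A le z. tsmult d (word [w]) [p] = tsmult d (word [w]) [q]"
      by (auto simp: tsmult_def word_def)
  qed
  finally show ?thesis by (simp add: Sdown_def)
qed

locale iso_setup =
  fixes A :: "'a set" and le :: "'a \<Rightarrow> 'a \<Rightarrow> bool"
    and B :: "'b set" and le' :: "'b \<Rightarrow> 'b \<Rightarrow> bool"
    and \<phi> :: "('a list \<Rightarrow> 'k::field) \<Rightarrow> ('b list \<Rightarrow> 'k::field)"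
  assumes gi: "graded_iso A le B le' \<phi>"
    and finA: "finite A" and finB: "finite B"
    and rkA: "ranked A le" and rkB: "ranked B le'"
    and latA: "is_lattice A le" and atA: "atomic A le" and poB: "is_poset B le'"
begin

abbreviation "TP \<equiv> tensor_elems (Vplus A le) :: ('a list \<Rightarrow> 'k) set"
abbreviation "TQ \<equiv> tensor_elems (Vplus B le') :: ('b list \<Rightarrow> 'k) set"

lemma gi_T: "x \<in> TP \<Longrightarrow> \<phi> x \<in> TQ"
  using gi by (simp add: graded_iso_def Let_def)
lemma gi_resp: "x \<in> TP \<Longrightarrow> y \<in> TP \<Longrightarrow> Beq A le x y \<Longrightarrow> Beq B le' (\<phi> x) (\<phi> y)"
  using gi by (simp add: graded_iso_def Let_def)
lemma gi_add: "x \<in> TP \<Longrightarrow> y \<in> TP \<Longrightarrow> Beq B le' (\<phi> (tadd x y)) (tadd (\<phi> x) (\<phi> y))"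
  using gi by (simp add: graded_iso_def Let_def)
lemma gi_smult: "x \<in> TP \<Longrightarrow> Beq B le' (\<phi> (tsmult c x)) (tsmult c (\<phi> x))"
  using gi by (simp add: graded_iso_def Let_def)
lemma gi_mult: "x \<in> TP \<Longrightarrow> y \<in> TP \<Longrightarrow> Beq B le' (\<phi> (tmult x y)) (tmult (\<phi> x) (\<phi> y))"
  using gi by (simp add: graded_iso_def Let_def)
lemma gi_hom: "x \<in> TP \<Longrightarrow> homogeneous A le m n x \<Longrightarrow> \<exists>y\<in>TQ. homogeneous B le' m n y \<and> Beq B le' (\<phi> x) y"
  using gi by (simp add: graded_iso_def Let_def)
lemma gi_inj: "x \<in> TP \<Longrightarrow> y \<in> TP \<Longrightarrow> Beq B le' (\<phi> x) (\<phi> y) \<Longrightarrow> Beq A le x y"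
  using gi by (simp add: graded_iso_def Let_def)
lemma gi_surj: "z \<in> TQ \<Longrightarrow> \<exists>x\<in>TP. Beq B le' (\<phi> x) z"
  using gi by (simp add: graded_iso_def Let_def)

lemma phi0: "Beq B le' (\<phi> (\<lambda>_. 0)) (\<lambda>_. 0)"
proof -
  have "Beq B le' (\<phi> (tadd (\<lambda>_. 0) (\<lambda>_. 0))) (tadd (\<phi> (\<lambda>_. 0)) (\<phi> (\<lambda>_. 0)))"
    by (rule gi_add) (simp_all add: tensor_zero)
  then have "(\<lambda>u. \<phi> (\<lambda>_. 0) u - (\<phi> (\<lambda>_. 0) u + \<phi> (\<lambda>_. 0) u)) \<in> BIdeal B le'"
    by (simp add: tadd_def Beq_def)
  then have "(\<lambda>u. (-1) * (\<phi> (\<lambda>_. 0) u - (\<phi> (\<lambda>_. 0) u + \<phi> (\<lambda>_. 0) u))) \<in> BIdeal B le'"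
    by (rule BIdeal_smult')
  then show ?thesis by (simp add: Beq_def)
qed

definition \<psi> :: "nat \<Rightarrow> ('a list \<Rightarrow> 'k) \<Rightarrow> ('b list \<Rightarrow> 'k::field)" where
  "\<psi> n x = (SOME y. vec B le' n y \<and> Beq B le' (\<phi> x) y)"

lemma \<psi>_spec:
  assumes "vec A le n x"
  shows "vec B le' n (\<psi> n x)" "Beq B le' (\<phi> x) (\<psi> n x)"
proof -
  have "\<exists>y. vec B le' n y \<and> Beq B le' (\<phi> x) y"
    using gi_hom[of x 1 n] assms by (auto simp: vec_def)
  then have "vec B le' n (\<psi> n x) \<and> Beq B le' (\<phi> x) (\<psi> n x)"
    unfolding \<psi>_def by (rule someI_ex)
  then show "vec B le' n (\<psi> n x)" "Beq B le' (\<phi> x) (\<psi> n x)" by auto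
qed

lemma vecT: "vec A le n x \<Longrightarrow> x \<in> TP" by (simp add: vec_def)
lemma vecTQ: "vec B le' n x \<Longrightarrow> x \<in> TQ" by (simp add: vec_def)

lemma \<psi>_add:
  assumes x: "vec A le n x" and y: "vec A le n y"
  shows "\<psi> n (tadd x y) = tadd (\<psi> n x) (\<psi> n y)"
proof (rule vec_Beq_eq)
  show "vec B le' n (\<psi> n (tadd x y))" by (rule \<psi>_spec(1)[OF vec_add[OF x y]])
  show "vec B le' n (tadd (\<psi> n x) (\<psi> n y))" by (rule vec_add[OF \<psi>_spec(1)[OF x] \<psi>_spec(1)[OF y]])
  have "Beq B le' (\<psi> n (tadd x y)) (\<phi> (tadd x y))" by (rule Beq_sym[OF \<psi>_spec(2)[OF vec_add[OF x y]]])
  also have "Beq B le' (\<phi> (tadd x y)) (tadd (\<phi> x) (\<phi> y))" by (rule gi_add[OF vecT[OF x] vecT[OF y]])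
  also have "Beq B le' (tadd (\<phi> x) (\<phi> y)) (tadd (\<psi> n x) (\<psi> n y))"
    by (rule Beq_add[OF \<psi>_spec(2)[OF x] \<psi>_spec(2)[OF y]])
  finally show "Beq B le' (\<psi> n (tadd x y)) (tadd (\<psi> n x) (\<psi> n y))" .
qed

lemma Beq_smult: "Beq A' le0 x y \<Longrightarrow> Beq A' le0 (tsmult c x) (tsmult c y)"
  unfolding Beq_def tsmult_def using BIdeal_smult'[of "\<lambda>u. x u - y u" A' le0 c]
  by (simp add: algebra_simps)

lemma \<psi>_smult:
  assumes x: "vec A le n x"
  shows "\<psi> n (tsmult c x) = tsmult c (\<psi> n x)"
proof (rule vec_Beq_eq)
  show "vec B le' n (\<psi> n (tsmult c x))" by (rule \<psi>_spec(1)[OF vec_smult[OF x]])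
  show "vec B le' n (tsmult c (\<psi> n x))" by (rule vec_smult[OF \<psi>_spec(1)[OF x]])
  have "Beq B le' (\<psi> n (tsmult c x)) (\<phi> (tsmult c x))" by (rule Beq_sym[OF \<psi>_spec(2)[OF vec_smult[OF x]]])
  also have "Beq B le' (\<phi> (tsmult c x)) (tsmult c (\<phi> x))" by (rule gi_smult[OF vecT[OF x]])
  also have "Beq B le' (tsmult c (\<phi> x)) (tsmult c (\<psi> n x))"
    by (rule Beq_smult[OF \<psi>_spec(2)[OF x]])
  finally show "Beq B le' (\<psi> n (tsmult c x)) (tsmult c (\<psi> n x))" .
qed

lemma \<psi>_zero: "\<psi> n (\<lambda>_. 0) = (\<lambda>_. 0)"
  using \<psi>_smult[OF vec_zero, of n 0] by (simp add: tsmult_def)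

lemma \<psi>_inj:
  assumes x: "vec A le n x" and y: "vec A le n y" and eq: "\<psi> n x = \<psi> n y"
  shows "x = y"
proof (rule vec_Beq_eq[OF x y])
  have "Beq B le' (\<phi> x) (\<psi> n x)" by (rule \<psi>_spec(2)[OF x])
  also have "Beq B le' (\<psi> n x) (\<phi> y)" unfolding eq by (rule Beq_sym[OF \<psi>_spec(2)[OF y]])
  finally show "Beq A le x y" by (rule gi_inj[OF vecT[OF x] vecT[OF y]])
qed

lemma \<psi>_mult:
  assumes x: "vec A le n x" and y: "vec A le m y"
  shows "tmult x y \<in> BIdeal A le \<longleftrightarrow> tmult (\<psi> n x) (\<psi> m y) \<in> BIdeal B le'"
proof -
  have xyT: "tmult x y \<in> TP" by (rule tensor_mult[OF vecT[OF x] vecT[OF y]])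
  have z: "(\<lambda>_. 0) \<in> TP" by (rule tensor_zero)
  have e1: "Beq B le' (\<phi> (tmult x y)) (tmult (\<psi> n x) (\<psi> m y))"
  proof -
    have "Beq B le' (\<phi> (tmult x y)) (tmult (\<phi> x) (\<phi> y))" by (rule gi_mult[OF vecT[OF x] vecT[OF y]])
    also have "Beq B le' (tmult (\<phi> x) (\<phi> y)) (tmult (\<psi> n x) (\<psi> m y))"
      by (rule Beq_mult[OF \<psi>_spec(2)[OF x] \<psi>_spec(2)[OF y] vecTQ[OF \<psi>_spec(1)[OF x]] gi_T[OF vecT[OF y]]])
    finally show ?thesis .
  qed
  show ?thesis
  proof
    assume "tmult x y \<in> BIdeal A le"
    then have "Beq A le (tmult x y) (\<lambda>_. 0)" by (simp add: Beq_0_iff)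
    then have "Beq B le' (\<phi> (tmult x y)) (\<phi> (\<lambda>_. 0))" by (rule gi_resp[OF xyT z])
    then have "Beq B le' (\<phi> (tmult x y)) (\<lambda>_. 0)" using phi0 Beq_trans by blast
    then have "Beq B le' (tmult (\<psi> n x) (\<psi> m y)) (\<lambda>_. 0)" using e1 Beq_sym Beq_trans by blast
    then show "tmult (\<psi> n x) (\<psi> m y) \<in> BIdeal B le'" by (simp add: Beq_0_iff)
  next
    assume "tmult (\<psi> n x) (\<psi> m y) \<in> BIdeal B le'"
    then have "Beq B le' (tmult (\<psi> n x) (\<psi> m y)) (\<lambda>_. 0)" by (simp add: Beq_0_iff)
    then have "Beq B le' (\<phi> (tmult x y)) (\<phi> (\<lambda>_. 0))" using e1 phi0 Beq_sym Beq_trans by blast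
    then have "Beq A le (tmult x y) (\<lambda>_. 0)" by (rule gi_inj[OF xyT z])
    then show "tmult x y \<in> BIdeal A le" by (simp add: Beq_0_iff)
  qed
qed

definition projn :: "nat \<Rightarrow> ('a list \<Rightarrow> 'k) \<Rightarrow> ('a list \<Rightarrow> 'k::field)" where
  "projn n x = (\<lambda>w. if length w = 1 \<and> rk A le (hd w) = n then x w else 0)"

lemma proj_vec:
  assumes x: "x \<in> TP"
  shows "vec A le n (projn n x)"
  unfolding vec_def
proof
  have "{w. projn n x w \<noteq> 0} \<subseteq> {w. x w \<noteq> 0}" by (auto simp: projn_def)
  then show "projn n x \<in> TP" using x unfolding tensor_elems_def
    by (auto intro: finite_subset simp: projn_def split: if_splits)
  show "homogeneous A le 1 n (projn n x)"
    unfolding homogeneous_def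
  proof (intro allI impI)
    fix w assume "projn n x w \<noteq> 0"
    then have "length w = 1" "rk A le (hd w) = n" by (auto simp: projn_def split: if_splits)
    then show "length w = 1 \<and> sum_list (map (rk A le) w) = n" by (cases w) auto
  qed
qed

lemma H:
  assumes "finite S"
  shows "\<forall>x. x \<in> TP \<longrightarrow> {w. x w \<noteq> 0} \<subseteq> S \<longrightarrow>
    (\<exists>y\<in>TQ. Beq B le' (\<phi> x) y \<and> (\<forall>u. rk B le' u = n \<longrightarrow> y [u] = \<psi> n (projn n x) [u]))"
  using assms
proof (induction S rule: finite_induct)
  case empty
  show ?case
  proof (intro allI impI)
    fix x :: "'a list \<Rightarrow> 'k" assume "x \<in> TP" "{w. x w \<noteq> 0} \<subseteq> {}"
    then have x0: "x = (\<lambda>_. 0)" by auto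
    have p0: "projn n x = (\<lambda>_. 0)" unfolding x0 projn_def by simp
    show "\<exists>y\<in>TQ. Beq B le' (\<phi> x) y \<and> (\<forall>u. rk B le' u = n \<longrightarrow> y [u] = \<psi> n (projn n x) [u])"
      unfolding p0 \<psi>_zero using phi0 tensor_zero[of "Vplus B le'"] x0 by (intro bexI[of _ "\<lambda>_. 0"]) auto
  qed
next
  case (insert w S)
  show ?case
  proof (intro allI impI)
    fix x :: "'a list \<Rightarrow> 'k" assume xT: "x \<in> TP" and xs: "{w. x w \<noteq> 0} \<subseteq> insert w S"
    define x1 where "x1 = (\<lambda>u. if u = w then 0 else x u)"
    have x1T: "x1 \<in> TP" using xT unfolding x1_def tensor_elems_def
      by (auto intro: finite_subset[of _ "{w. x w \<noteq> 0}"])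
    have x1s: "{u. x1 u \<noteq> 0} \<subseteq> S" using xs by (auto simp: x1_def)
    obtain y1 where y1: "y1 \<in> TQ" "Beq B le' (\<phi> x1) y1"
        "\<forall>u. rk B le' u = n \<longrightarrow> y1 [u] = \<psi> n (projn n x1) [u]"
      using insert.IH x1T x1s by blast
    show "\<exists>y\<in>TQ. Beq B le' (\<phi> x) y \<and> (\<forall>u. rk B le' u = n \<longrightarrow> y [u] = \<psi> n (projn n x) [u])"
    proof (cases "x w = 0")
      case True
      then have "x1 = x" by (auto simp: x1_def)
      then show ?thesis using y1 by blast
    next
      case False
      have wV: "set w \<subseteq> Vplus A le" using xT False by (auto simp: tensor_elems_def)
      define x2 where "x2 = tsmult (x w) (word w)"
      have x2T: "x2 \<in> TP" unfolding x2_def by (rule tensor_smult[OF tensor_word[OF wV]])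
      have x2h: "homogeneous A le (length w) (sum_list (map (rk A le) w)) x2"
        by (auto simp: homogeneous_def x2_def tsmult_def word_def split: if_splits)
      obtain y2 where y2: "y2 \<in> TQ" "homogeneous B le' (length w) (sum_list (map (rk A le) w)) y2"
          "Beq B le' (\<phi> x2) y2"
        using gi_hom[OF x2T x2h] by blast
      have xsplit: "x = tadd x1 x2"
        by (auto simp: tadd_def x1_def x2_def tsmult_def word_def)
      have bx: "Beq B le' (\<phi> x) (tadd y1 y2)"
      proof -
        have "Beq B le' (\<phi> x) (tadd (\<phi> x1) (\<phi> x2))" unfolding xsplit by (rule gi_add[OF x1T x2T])
        also have "Beq B le' (tadd (\<phi> x1) (\<phi> x2)) (tadd y1 y2)" by (rule Beq_add[OF y1(2) y2(3)])
        finally show ?thesis .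
      qed
      have yT: "tadd y1 y2 \<in> TQ" by (rule tensor_add[OF y1(1) y2(1)])
      show ?thesis
      proof (cases "length w = 1 \<and> rk A le (hd w) = n")
        case True
        then obtain a where w: "w = [a]" "rk A le a = n" by (cases w) auto
        have x2v: "vec A le n x2" using x2T x2h w by (simp add: vec_def)
        have pe: "projn n x = tadd (projn n x1) x2"
          by (auto simp: projn_def tadd_def x1_def x2_def tsmult_def word_def w)
        have y2v: "vec B le' n y2" using y2 w by (simp add: vec_def)
        have y2e: "y2 = \<psi> n x2"
        proof (rule vec_Beq_eq[OF y2v \<psi>_spec(1)[OF x2v]])
          have "Beq B le' y2 (\<phi> x2)" by (rule Beq_sym[OF y2(3)])
          also have "Beq B le' (\<phi> x2) (\<psi> n x2)" by (rule \<psi>_spec(2)[OF x2v])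
          finally show "Beq B le' y2 (\<psi> n x2)" .
        qed
        have "\<psi> n (projn n x) = tadd (\<psi> n (projn n x1)) y2"
          unfolding pe y2e by (rule \<psi>_add[OF proj_vec[OF x1T] x2v])
        then show ?thesis using yT bx y1(3) by (auto simp: tadd_def)
      next
        case False
        have pe: "projn n x = projn n x1"
          using False by (auto simp: projn_def x1_def)
        have "y2 [u] = 0" if "rk B le' u = n" for u
        proof (rule ccontr)
          assume "y2 [u] \<noteq> 0"
          then have "length w = 1" "sum_list (map (rk A le) w) = n"
            using y2(2) that unfolding homogeneous_def by auto
          then show False using False by (cases w) auto
        qed
        then show ?thesis using yT bx y1(3) pe by (auto simp: tadd_def)
      qed
    qed
  qed
qed

lemma \<psi>_surj:
  assumes z: "vec B le' n z"
  shows "\<exists>x. vec A le n x \<and> \<psi> n x = z"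
proof -
  obtain x0 where x0: "x0 \<in> TP" "Beq B le' (\<phi> x0) z" using gi_surj[OF vecTQ[OF z]] by blast
  have fin: "finite {w. x0 w \<noteq> 0}" using x0 by (simp add: tensor_elems_def)
  obtain y where y: "y \<in> TQ" "Beq B le' (\<phi> x0) y" "\<forall>u. rk B le' u = n \<longrightarrow> y [u] = \<psi> n (projn n x0) [u]"
    using H[OF fin] x0 by blast
  have zy: "Beq B le' z y" using Beq_sym[OF x0(2)] y(2) by (rule Beq_trans)
  have L: "L2prop B le' (\<lambda>u. z u - y u)" using zy by (simp add: Beq_def BIdeal_L2)
  have pv: "vec A le n (projn n x0)" by (rule proj_vec[OF x0(1)])
  have "z = \<psi> n (projn n x0)"
  proof (rule vec_eqI[OF z \<psi>_spec(1)[OF pv]])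
    fix u
    show "z [u] = \<psi> n (projn n x0) [u]"
    proof (cases "rk B le' u = n")
      case True
      have "z [u] - y [u] = 0" using L unfolding L2prop_def by force
      then show ?thesis using y(3) True by simp
    next
      case False
      have "z [u] = 0" using vec_support1(2)[OF z, of u] False by blast
      moreover have "\<psi> n (projn n x0) [u] = 0" using vec_support1(2)[OF \<psi>_spec(1)[OF pv], of u] False by blast
      ultimately show ?thesis by simp
    qed
  qed
  then show ?thesis using pv by blast
qed

end


locale iso_lat = iso_setup +
  assumes latA: "is_lattice A le" and atA: "atomic A le"
begin

lemma word_vec_A: "v \<in> A \<Longrightarrow> rk A le v = n \<Longrightarrow> n \<ge> 1 \<Longrightarrow> vec A le n (word [v] :: 'a list \<Rightarrow> 'k::field)"
  by (intro vec_word) (auto simp: Vplus_def)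

lemma word_vec_B: "v \<in> B \<Longrightarrow> rk B le' v = n \<Longrightarrow> n \<ge> 1 \<Longrightarrow> vec B le' n (word [v] :: 'b list \<Rightarrow> 'k::field)"
  by (intro vec_word) (auto simp: Vplus_def)

lemma word_nonzero: "word [v] \<noteq> (\<lambda>_. (0::'c::field))"
proof
  assume "word [v] = (\<lambda>_. (0::'c))"
  then have "word [v] [v] = (0::'c)" by metis
  then show False by (simp add: word_def)
qed

lemma lemmaV:
  assumes v: "v \<in> A" "rk A le v = n" and n: "n \<ge> 2"
  shows "\<exists>u c. c \<noteq> 0 \<and> u \<in> B \<and> rk B le' u = n \<and> \<psi> n (word [v]) = tsmult c (word [u])"
proof -
  have vv: "vec A le n (word [v] :: 'a list \<Rightarrow> 'k::field)" using v n by (intro word_vec_A) auto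
  define y where "y = \<psi> n (word [v])"
  have yv: "vec B le' n y" unfolding y_def by (rule \<psi>_spec(1)[OF vv])
  have "y \<noteq> (\<lambda>_. 0)"
  proof
    assume "y = (\<lambda>_. 0)"
    then have "\<psi> n (word [v]) = \<psi> n (\<lambda>_. 0)" unfolding y_def \<psi>_zero .
    note q = \<psi>_inj[OF vv vec_zero, OF this]
    show False using fun_cong[OF q, of "[v]"] by (simp add: word_def)
  qed
  then obtain w where "y w \<noteq> 0" by auto
  then obtain u' where u': "w = [u']" "u' \<in> Vplus B le'" "rk B le' u' = n" using vec_support[OF yv] by blast
  have yu': "y [u'] \<noteq> 0" using \<open>y w \<noteq> 0\<close> u' by simp
  have u'B: "u' \<in> B" using u' by (simp add: Vplus_def)
  have uv: "vec B le' n (word [u'] :: 'b list \<Rightarrow> 'k::field)" using u'B u' n by (intro word_vec_B) auto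
  obtain x' where x': "vec A le n x'" "\<psi> n x' = word [u']" using \<psi>_surj[OF uv] by blast
  have supp: "z = v" if xz: "x' [z] \<noteq> 0" for z
  proof (rule ccontr)
    assume zv: "z \<noteq> v"
    have zA: "z \<in> A" "rk A le z = n" using vec_support1[OF x'(1) xz] by auto
    obtain s0 t0 where st0: "s0 \<in> Sdown A le z" "t0 \<in> Sdown A le z" "s0 \<noteq> t0"
      using lat_two_covers[OF finA latA atA rkA zA(1)] zA n by auto
    have "\<not> Sdown A le z \<subseteq> Sdown A le v"
      using lat_Sdown_notsub[OF latA zA(1) v(1) st0] zv by blast
    then obtain s where s: "s \<in> Sdown A le z" "s \<notin> Sdown A le v" by blast
    obtain t where t: "t \<in> Sdown A le z" "t \<noteq> s" using st0 by blast
    have sV: "s \<in> Vplus A le" "rk A le s = n - 1" using Sdown_Vplus[OF rkA _ s(1)] zA n by auto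
    have bv: "vec A le (n - 1) (word [s] :: 'a list \<Rightarrow> 'k::field)" using vec_word[OF sV] .
    have "tmult (word [v]) (word [s]) \<in> BIdeal A le"
    proof (subst C2[OF rkA finA n vv bv], intro allI impI ballI)
      fix z' p q assume "word [v] [z'] \<noteq> (0::'k::field)" "p \<in> Sdown A le z'" "q \<in> Sdown A le z'"
      then have "z' = v" "p \<noteq> s" "q \<noteq> s" using s(2) by (auto simp: word_def split: if_splits)
      then show "word [s] [p] = (word [s] [q] :: 'k::field)" by (simp add: word_def)
    qed
    then have "tmult y (\<psi> (n - 1) (word [s])) \<in> BIdeal B le'"
      unfolding y_def using \<psi>_mult[OF vv bv] by blast
    moreover have bvQ: "vec B le' (n - 1) (\<psi> (n - 1) (word [s]))" by (rule \<psi>_spec(1)[OF bv])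
    ultimately have H1: "\<forall>z. y [z] \<noteq> 0 \<longrightarrow> (\<forall>p\<in>Sdown B le' z. \<forall>q\<in>Sdown B le' z.
          \<psi> (n - 1) (word [s]) [p] = \<psi> (n - 1) (word [s]) [q])"
      using C2[OF rkB finB n yv] by blast
    have "tmult (word [u']) (\<psi> (n - 1) (word [s])) \<in> BIdeal B le'"
    proof (subst C2[OF rkB finB n uv bvQ], intro allI impI)
      fix z' assume "word [u'] [z'] \<noteq> (0::'k::field)"
      then have "z' = u'" by (auto simp: word_def split: if_splits)
      then show "\<forall>p\<in>Sdown B le' z'. \<forall>q\<in>Sdown B le' z'. \<psi> (n - 1) (word [s]) [p] = \<psi> (n - 1) (word [s]) [q]"
        using H1 yu' by blast
    qed
    then have "tmult x' (word [s]) \<in> BIdeal A le"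
      using \<psi>_mult[OF x'(1) bv] x'(2) by simp
    note F = C2[OF rkA finA n x'(1) bv, THEN iffD1, OF this, rule_format, OF xz s(1) t(1)]
    then show False using t(2) by (simp add: word_def)
  qed
  have x'e: "x' = tsmult (x' [v]) (word [v])"
  proof (rule vec_eqI[OF x'(1) vec_smult[OF vv]])
    fix a show "x' [a] = tsmult (x' [v]) (word [v]) [a]"
      using supp[of a] by (cases "a = v") (auto simp: tsmult_def word_def)
  qed
  have c0: "x' [v] \<noteq> 0"
  proof
    assume "x' [v] = 0"
    then have "x' = (\<lambda>_. 0)" using x'e by (simp add: tsmult_def)
    then have "word [u'] = \<psi> n (\<lambda>_. 0)" using x'(2) by simp
    from fun_cong[OF this, of "[u']"] show False by (simp add: word_def \<psi>_zero)
  qed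
  have "word [u'] = tsmult (x' [v]) y"
    using x'(2) \<psi>_smult[OF vv, of "x' [v]"] x'e unfolding y_def by simp
  then have "y = tsmult (inverse (x' [v])) (word [u'])"
    using c0 by (auto simp: tsmult_def)
  then show ?thesis using c0 u'B u'(3) unfolding y_def
    by (intro exI[of _ u'] exI[of _ "inverse (x' [v])"]) auto
qed

definition F :: "'a \<Rightarrow> 'b" where
  "F v = (SOME u. \<exists>c. c \<noteq> 0 \<and> u \<in> B \<and> rk B le' u = rk A le v \<and> \<psi> (rk A le v) (word [v]) = tsmult c (word [u]))"

lemma F_spec:
  assumes v: "v \<in> geq2 A le"
  shows "\<exists>c. c \<noteq> 0 \<and> F v \<in> B \<and> rk B le' (F v) = rk A le v \<and> \<psi> (rk A le v) (word [v]) = tsmult c (word [F v])"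
proof -
  have "\<exists>u c. c \<noteq> 0 \<and> u \<in> B \<and> rk B le' u = rk A le v \<and> \<psi> (rk A le v) (word [v]) = tsmult c (word [u])"
    using lemmaV[of v "rk A le v"] v by (auto simp: geq2_def)
  then show ?thesis unfolding F_def by (rule someI_ex[where P="\<lambda>u. \<exists>c. c \<noteq> 0 \<and> u \<in> B \<and> rk B le' u = rk A le v \<and> \<psi> (rk A le v) (word [v]) = tsmult c (word [u])"])
qed

lemma F_geq2: "v \<in> geq2 A le \<Longrightarrow> F v \<in> geq2 B le'"
  using F_spec[of v] by (auto simp: geq2_def)

lemma F_rk: "v \<in> geq2 A le \<Longrightarrow> rk B le' (F v) = rk A le v"
  using F_spec[of v] by auto

lemma F_inj: "inj_on F (geq2 A le)"
proof
  fix v v' assume v: "v \<in> geq2 A le" and v': "v' \<in> geq2 A le" and eq: "F v = F v'"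
  obtain c where c: "c \<noteq> 0" "\<psi> (rk A le v) (word [v]) = tsmult c (word [F v])" using F_spec[OF v] by blast
  obtain c' where c': "c' \<noteq> 0" "\<psi> (rk A le v') (word [v']) = tsmult c' (word [F v'])" using F_spec[OF v'] by blast
  have rr: "rk A le v' = rk A le v" using F_rk[OF v] F_rk[OF v'] eq by simp
  define n where "n = rk A le v"
  have vv: "vec A le n (word [v])" using v by (intro vec_word) (auto simp: geq2_def Vplus_def n_def)
  have vv': "vec A le n (word [v'])" using v' rr by (intro vec_word) (auto simp: geq2_def Vplus_def n_def)
  have "\<psi> n (word [v']) = \<psi> n (tsmult (c' / c) (word [v]))"
    unfolding \<psi>_smult[OF vv] using c c' eq rr by (auto simp: n_def tsmult_def)
  then have "word [v'] = tsmult (c' / c) (word [v])" by (rule \<psi>_inj[OF vv' vec_smult[OF vv]])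
  from fun_cong[OF this, of "[v']"] show "v = v'" by (auto simp: word_def tsmult_def split: if_splits)
qed

lemma tsmult_1: "tsmult 1 x = x" by (simp add: tsmult_def)

lemma F_two:
  assumes v: "v \<in> geq2 A le"
  shows "\<exists>p q. p \<in> Sdown B le' (F v) \<and> q \<in> Sdown B le' (F v) \<and> p \<noteq> q"
proof -
  define n where "n = rk A le v"
  have vA: "v \<in> A" and n: "n \<ge> 2" using v by (auto simp: geq2_def n_def)
  obtain s t where st: "s \<in> Sdown A le v" "t \<in> Sdown A le v" "s \<noteq> t"
    using lat_two_covers[OF finA latA atA rkA vA] n by (auto simp: n_def)
  have sV: "s \<in> Vplus A le" "rk A le s = n - 1" using Sdown_Vplus[OF rkA _ st(1)] n by (auto simp: n_def)
  have bv: "vec A le (n - 1) (word [s])" by (rule vec_word[OF sV])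
  have vv: "vec A le n (word [v])" using v by (intro vec_word) (auto simp: geq2_def Vplus_def n_def)
  have "tmult (word [v]) (word [s]) \<notin> BIdeal A le"
  proof
    assume "tmult (word [v]) (word [s]) \<in> BIdeal A le"
    note F = C2[OF rkA finA n vv bv, THEN iffD1, OF this, rule_format, of v s t]
    then show False using st by (simp add: word_def)
  qed
  then have nI: "tmult (\<psi> n (word [v])) (\<psi> (n - 1) (word [s])) \<notin> BIdeal B le'"
    using \<psi>_mult[OF vv bv] by blast
  obtain c where c: "c \<noteq> 0" "\<psi> n (word [v]) = tsmult c (word [F v])" using F_spec[OF v] n_def by blast
  have yv: "vec B le' n (\<psi> n (word [v]))" by (rule \<psi>_spec(1)[OF vv])
  have bvQ: "vec B le' (n - 1) (\<psi> (n - 1) (word [s]))" by (rule \<psi>_spec(1)[OF bv])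
  have "\<not> (\<forall>z. \<psi> n (word [v]) [z] \<noteq> 0 \<longrightarrow> (\<forall>p\<in>Sdown B le' z. \<forall>q\<in>Sdown B le' z.
          \<psi> (n - 1) (word [s]) [p] = \<psi> (n - 1) (word [s]) [q]))"
    using C2[OF rkB finB n yv bvQ] nI by blast
  then obtain z p q where "\<psi> n (word [v]) [z] \<noteq> 0" "p \<in> Sdown B le' z" "q \<in> Sdown B le' z"
     "\<psi> (n - 1) (word [s]) [p] \<noteq> \<psi> (n - 1) (word [s]) [q]" by blast
  moreover then have "z = F v" using c by (auto simp: tsmult_def word_def split: if_splits)
  ultimately show ?thesis by metis
qed

lemma F_cov:
  assumes v: "v \<in> geq2 A le" and w: "w \<in> geq2 A le"
  shows "covers A le v w \<longleftrightarrow> covers B le' (F v) (F w)"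
proof (cases "rk A le v = Suc (rk A le w)")
  case True
  define n where "n = rk A le v"
  have vA: "v \<in> A" "rk A le v = n" and wA: "w \<in> A" "rk A le w = n - 1" and n: "n \<ge> 2"
    using v w True by (auto simp: geq2_def n_def)
  have vv: "vec A le n (word [v])" using vA n by (intro vec_word) (auto simp: Vplus_def)
  have wv: "vec A le (n - 1) (word [w])" using wA n by (intro vec_word) (auto simp: Vplus_def)
  obtain c where c: "c \<noteq> 0" "\<psi> n (word [v]) = tsmult c (word [F v])" using F_spec[OF v] vA by blast
  obtain d where d: "d \<noteq> 0" "\<psi> (n - 1) (word [w]) = tsmult d (word [F w])" using F_spec[OF w] wA by metis
  have two: "\<exists>p q. p \<in> Sdown A le v \<and> q \<in> Sdown A le v \<and> p \<noteq> q"
    using lat_two_covers[OF finA latA atA rkA vA(1)] vA n by auto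
  note eA = GL[OF rkA finA n one_neq_zero one_neq_zero vA wA two, unfolded tsmult_1]
  note e1 = \<psi>_mult[OF vv wv]
  have FB: "F v \<in> B" "rk B le' (F v) = n" "F w \<in> B" "rk B le' (F w) = n - 1"
    using F_geq2[OF v] F_geq2[OF w] F_rk[OF v] F_rk[OF w] vA wA by (auto simp: geq2_def)
  note eB = GL[OF rkB finB n c(1) d(1) FB F_two[OF v]]
  have e2: "tmult (\<psi> n (word [v])) (\<psi> (n - 1) (word [w])) \<in> BIdeal B le' \<longleftrightarrow> \<not> covers B le' (F v) (F w)"
    using eB c(2) d(2) by simp
  show ?thesis using e1 e2 eA by metis
next
  case False
  have "\<not> covers A le v w" using rk_cov[OF rkA, of v w] False by auto
  moreover have "\<not> covers B le' (F v) (F w)" using rk_cov[OF rkB, of "F v" "F w"] False F_rk[OF v] F_rk[OF w] by auto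
  ultimately show ?thesis by simp
qed

lemma F_surj_aux:
  assumes n: "n \<ge> 2" and fin: "finite S"
  shows "\<forall>x. vec A le n x \<longrightarrow> {a. x [a] \<noteq> 0} \<subseteq> S \<longrightarrow> (\<forall>u. \<psi> n x [u] \<noteq> 0 \<longrightarrow> (\<exists>v. x [v] \<noteq> 0 \<and> F v = u))"
  using fin
proof (induction S rule: finite_induct)
  case empty
  show ?case
  proof (intro allI impI)
    fix x u assume x: "vec A le n x" "{a. x [a] \<noteq> 0} \<subseteq> {}" and u: "\<psi> n x [u] \<noteq> 0"
    have "x = (\<lambda>_. 0)" using x by (intro vec_eqI[OF x(1) vec_zero]) auto
    then show "\<exists>v. x [v] \<noteq> 0 \<and> F v = u" using u \<psi>_zero by simp
  qed
next
  case (insert a S)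
  show ?case
  proof (intro allI impI)
    fix x u assume x: "vec A le n x" "{a'. x [a'] \<noteq> 0} \<subseteq> insert a S" and u: "\<psi> n x [u] \<noteq> 0"
    show "\<exists>v. x [v] \<noteq> 0 \<and> F v = u"
    proof (cases "x [a] = 0")
      case True
      then have "{a'. x [a'] \<noteq> 0} \<subseteq> S" using x(2) by auto
      then show ?thesis using insert.IH x(1) u by blast
    next
      case False
      have aV: "a \<in> Vplus A le" "rk A le a = n" "a \<in> A" using vec_support1[OF x(1) False] by auto
      have ag: "a \<in> geq2 A le" using aV n by (simp add: geq2_def)
      have av: "vec A le n (word [a])" by (rule vec_word[OF aV(1,2)])
      define x1 where "x1 = tadd x (tsmult (- x [a]) (word [a]))"
      have x1v: "vec A le n x1" unfolding x1_def by (intro vec_add x(1) vec_smult av)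
      have x1a: "x1 [b] = (if b = a then 0 else x [b])" for b
        by (simp add: x1_def tadd_def tsmult_def word_def)
      have x1S: "{a'. x1 [a'] \<noteq> 0} \<subseteq> S" using x(2) by (auto simp: x1a)
      have xe: "x = tadd x1 (tsmult (x [a]) (word [a]))"
        by (auto simp: x1_def tadd_def tsmult_def)
      obtain c where c: "\<psi> n (word [a]) = tsmult c (word [F a])" using F_spec[OF ag] aV by blast
      have "\<psi> n x = tadd (\<psi> n x1) (tsmult (x [a]) (tsmult c (word [F a])))"
        by (subst xe, subst \<psi>_add[OF x1v vec_smult[OF av]], subst \<psi>_smult[OF av], simp add: c)
      then have pe: "\<psi> n x [u] = \<psi> n x1 [u] + x [a] * (c * (if u = F a then 1 else 0))"
        by (simp add: tadd_def tsmult_def word_def)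
      show ?thesis
      proof (cases "F a = u")
        case True then show ?thesis using False by blast
      next
        case nF: False
        then have "\<psi> n x1 [u] \<noteq> 0" using u pe by auto
        then obtain v where "x1 [v] \<noteq> 0" "F v = u" using insert.IH x1v x1S by blast
        then show ?thesis by (auto simp: x1a split: if_splits)
      qed
    qed
  qed
qed

lemma F_surj: "F ` geq2 A le = geq2 B le'"
proof
  show "F ` geq2 A le \<subseteq> geq2 B le'" using F_geq2 by blast
  show "geq2 B le' \<subseteq> F ` geq2 A le"
  proof
    fix u assume u: "u \<in> geq2 B le'"
    define n where "n = rk B le' u"
    have n: "n \<ge> 2" using u by (simp add: geq2_def n_def)
    have uv: "vec B le' n (word [u])" using u n by (intro vec_word) (auto simp: geq2_def Vplus_def n_def)
    obtain x where x: "vec A le n x" "\<psi> n x = word [u]" using \<psi>_surj[OF uv] by blast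
    have fin: "finite {a. x [a] \<noteq> 0}"
      by (rule finite_subset[OF _ finA]) (auto dest: vec_support1(3)[OF x(1)])
    have "\<psi> n x [u] \<noteq> 0" using x(2) by (simp add: word_def)
    then obtain v where v: "x [v] \<noteq> 0" "F v = u" using F_surj_aux[OF n fin] x(1) by blast
    have "v \<in> geq2 A le" using vec_support1[OF x(1) v(1)] n by (simp add: geq2_def)
    then show "u \<in> F ` geq2 A le" using v by blast
  qed
qed

lemma Rg2_F: "p \<in> geq2 A le \<Longrightarrow> q \<in> geq2 A le \<Longrightarrow> Rg2 A le p q \<longleftrightarrow> Rg2 B le' (F p) (F q)"
  using F_cov[of p q] F_geq2[of p] F_geq2[of q] by (simp add: Rg2_def)

lemma chain_fwd:
  "(Rg2 A le)\<^sup>*\<^sup>* y x \<Longrightarrow> y \<in> geq2 A le \<Longrightarrow> (Rg2 B le')\<^sup>*\<^sup>* (F y) (F x)"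
proof (induction rule: rtranclp_induct)
  case base then show ?case by simp
next
  case (step z x)
  have "z \<in> geq2 A le" "x \<in> geq2 A le" using step.hyps(2) by (auto simp: Rg2_def)
  then have "Rg2 B le' (F z) (F x)" using Rg2_F step.hyps(2) by blast
  then show ?case using step.IH step.prems by (meson rtranclp.rtrancl_into_rtrancl)
qed

lemma chain_bwd:
  "(Rg2 B le')\<^sup>*\<^sup>* (F y) z \<Longrightarrow> y \<in> geq2 A le \<Longrightarrow> (\<forall>x\<in>geq2 A le. z = F x \<longrightarrow> (Rg2 A le)\<^sup>*\<^sup>* y x)"
proof (induction rule: rtranclp_induct)
  case base
  show ?case
  proof (intro ballI impI)
    fix x assume "x \<in> geq2 A le" "F y = F x"
    then have "x = y" using F_inj base by (auto dest: inj_onD)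
    then show "(Rg2 A le)\<^sup>*\<^sup>* y x" by simp
  qed
next
  case (step z z')
  show ?case
  proof (intro ballI impI)
    fix x assume x: "x \<in> geq2 A le" "z' = F x"
    have "z \<in> geq2 B le'" using step.hyps(2) by (simp add: Rg2_def)
    then obtain x0 where x0: "x0 \<in> geq2 A le" "z = F x0" using F_surj by blast
    have "(Rg2 A le)\<^sup>*\<^sup>* y x0" using step.IH step.prems x0 by blast
    moreover have "Rg2 A le x0 x" using Rg2_F[OF x0(1) x(1)] step.hyps(2) x0 x by simp
    ultimately show "(Rg2 A le)\<^sup>*\<^sup>* y x" by (meson rtranclp.rtrancl_into_rtrancl)
  qed
qed

lemma main_result:
  "\<exists>f. bij_betw f (geq2 A le) (geq2 B le') \<and>
           (\<forall>x\<in>geq2 A le. \<forall>y\<in>geq2 A le. le x y \<longleftrightarrow> le' (f x) (f y))"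
proof (intro exI conjI ballI)
  show "bij_betw F (geq2 A le) (geq2 B le')" using F_inj F_surj by (simp add: bij_betw_def)
  fix x y assume x: "x \<in> geq2 A le" and y: "y \<in> geq2 A le"
  have poA: "is_poset A le" using latA by (simp add: is_lattice_def)
  have "le x y \<longleftrightarrow> (Rg2 A le)\<^sup>*\<^sup>* y x" by (rule le_iff_chain[OF finA poA rkA x y])
  also have "\<dots> \<longleftrightarrow> (Rg2 B le')\<^sup>*\<^sup>* (F y) (F x)"
    using chain_fwd[OF _ y] chain_bwd[OF _ y] x by blast
  also have "\<dots> \<longleftrightarrow> le' (F x) (F y)"
    by (rule le_iff_chain[OF finB poB rkB F_geq2[OF x] F_geq2[OF y], symmetric])
  finally show "le x y \<longleftrightarrow> le' (F x) (F y)" .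
qed

end


theorem mainTheorem16:
  fixes A :: "'a set" and le :: "'a \<Rightarrow> 'a \<Rightarrow> bool"
    and B :: "'b set" and le' :: "'b \<Rightarrow> 'b \<Rightarrow> bool"
  assumes "finite A" and "is_lattice A le" and "atomic A le" and "ranked A le"
    and "uniform A le"
    and "finite B" and "is_poset B le'" and "ranked B le'"
    and "\<exists>!x. minimal_el B le' x"
    and "B_equiv TYPE('k::field) B le' A le"
  shows "\<exists>f. bij_betw f (geq2 A le) (geq2 B le') \<and>
           (\<forall>x\<in>geq2 A le. \<forall>y\<in>geq2 A le. le x y \<longleftrightarrow> le' (f x) (f y))"
proof -
  from assms(10) obtain \<phi> :: "('a list \<Rightarrow> 'k) \<Rightarrow> ('b list \<Rightarrow> 'k)"
    where gi: "graded_iso A le B le' \<phi>" unfolding B_equiv_def by blast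
  interpret iso_lat A le B le' \<phi>
    using gi assms by unfold_locales auto
  show ?thesis by (rule main_result)
qed

end
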